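(* Let $\mathbb G=V_1\times V_2$ be a step-two Carnot group of rank $r\geq 3$. The following are equivalent: (i) $\mathcal A_h(\mathbb G)=\mathcal A(V_1\times V_2)$; (ii) $\oplus_{k=n-r}^{n-3}\Lambda^k(\pi)=\{0\}$ for all integers $n\geq r$ and all surjective Carnot morphisms $\pi:\mathbb F_n\to\mathbb G$; (iii) $\Lambda^{r-3}(\pi)=\{0\}$ for some surjective Carnot morphism $\pi:\mathbb F_r\to\mathbb G$; (iv) $\Lambda^{n-3}(\pi)=\{0\}$ for some integer $n\geq r$ and some surjective Carnot morphism $\pi:\mathbb F_n\to\mathbb G$.
   Context: A step-two Carnot group is $\mathbb G=V_1\times V_2$, where $V_1,V_2$ are finite-dimensional real vector spaces with $V_2\neq\{0\}$, equipped with a bilinear skew-symmetric map $[\cdot,\cdot]:V_1\times V_1\to V_2$ with $\operatorname{span}\{[x,x']:x,x'\in V_1\}=V_2$, and group law $(x,z)\cdot(x',z')=(x+x',z+z'+[x,x'])$; its rank is $\dim V_1$. $\mathcal A_h(\mathbb G)$ is the space of $h$-affine maps $f:\mathbb G\to\mathbb R$, i.e. such that for all $(x,z)\in\mathbb G$, $y\in V_1$, $t\mapsto f((x,z)\cdot(ty,0))$ is affine; $\mathcal A(V_1\times V_2)$ is the space of maps $V_1\times V_2\to\mathbb R$ that are affine in the usual vector-space sense. $\mathbb F_n=\Lambda^1(\mathbb R^n)\times\Lambda^2(\mathbb R^n)$ with bracket $[\theta,\theta']=\theta\wedge\theta'$ is the free step-two Carnot group of rank $n$. A Carnot morphism $\pi:\mathbb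 G\to\mathbb G'$ is a map $\pi(x,z)=(\pi_1(x),\pi_2(z))$ with $\pi_1,\pi_2$ linear and $\pi_2([x,y])=[\pi_1(x),\pi_1(y)]'$. For $\eta\in\Lambda^k(\mathbb R^n)$, $\operatorname{Anh}^{1,2}_\wedge\eta:=\{(\theta,\omega)\in\mathbb F_n:\theta\wedge\eta=0,\ \omega\wedge\eta=0\}$, and for a Carnot morphism $\pi:\mathbb F_n\to\mathbb G$, $\Lambda^k(\pi):=\{\eta\in\Lambda^k(\mathbb R^n):\ker\pi\subset\operatorname{Anh}^{1,2}_\wedge\eta\}$. *)

theory Defs
  imports "HOL-Analysis.Analysis"
begin

text \<open>A step-two Carnot group is given by its bracket br : V1 x V1 -> V2
 (V1, V2 finite-dimensional real vector spaces, modelled as euclidean spaces;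
 V2 is automatically nonzero since DIM >= 1).\<close>

definition step2_carnot :: "('a::euclidean_space \<Rightarrow> 'a \<Rightarrow> 'b::euclidean_space) \<Rightarrow> bool" where
  "step2_carnot br \<longleftrightarrow> bilinear br \<and> (\<forall>x y. br x y = - br y x)
     \<and> span {br x y | x y. True} = UNIV"

definition carnot_mult :: "('a::euclidean_space \<Rightarrow> 'a \<Rightarrow> 'b::euclidean_space)
   \<Rightarrow> 'a \<times> 'b \<Rightarrow> 'a \<times> 'b \<Rightarrow> 'a \<times> 'b" where
  "carnot_mult br p q = (fst p + fst q, snd p + snd q + br (fst p) (fst q))"

definition h_affine :: "('a::euclidean_space \<Rightarrow> 'a \<Rightarrow> 'b::euclidean_space)
   \<Rightarrow> ('a \<times> 'b \<Rightarrow> real) \<Rightarrow> bool" where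
  "h_affine br f \<longleftrightarrow> (\<forall>p y. \<exists>a b. \<forall>t::real.
      f (carnot_mult br p (t *\<^sub>R y, 0)) = a + b * t)"

definition affine_fun :: "('v::real_vector \<Rightarrow> real) \<Rightarrow> bool" where
  "affine_fun f \<longleftrightarrow> (\<exists>c L. linear L \<and> (\<forall>p. f p = c + L p))"

text \<open>A form is a coefficient function on finite index sets: the k-form
  \<Sum>_I f(I) e_I, where e_I = e_{i1} \<and> ... \<and> e_{ik} with i1 < ... < ik.
  Lam n k is \<Lambda>^k(R^n), indices in {0..<n}.\<close>

type_synonym form = "nat set \<Rightarrow> real"

definition Lam :: "nat \<Rightarrow> nat \<Rightarrow> form set" where
  "Lam n k = {f. \<forall>S. f S \<noteq> 0 \<longrightarrow> S \<subseteq> {..<n} \<and> card S = k}"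

definition zero_form :: form where
  "zero_form = (\<lambda>S. 0)"

text \<open>Sign with e_I \<and> e_J = wsign I J e_{I \<union> J} for disjoint I, J.\<close>
definition wsign :: "nat set \<Rightarrow> nat set \<Rightarrow> real" where
  "wsign I J = (-1) ^ card {(i, j). i \<in> I \<and> j \<in> J \<and> j < i}"

definition wedge :: "form \<Rightarrow> form \<Rightarrow> form" where
  "wedge f g = (\<lambda>K. \<Sum>I\<in>Pow K. wsign I (K - I) * f I * g (K - I))"

definition lin_on :: "form set \<Rightarrow> (form \<Rightarrow> 'v::real_vector) \<Rightarrow> bool" where
  "lin_on A L \<longleftrightarrow> (\<forall>f\<in>A. \<forall>g\<in>A. L (\<lambda>S. f S + g S) = L f + L g)
      \<and> (\<forall>c. \<forall>f\<in>A. L (\<lambda>S. c * f S) = c *\<^sub>R L f)"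

text \<open>pi(theta, omega) = (pi1 theta, pi2 omega) is a Carnot morphism F_n -> G.\<close>
definition carnot_morph_free :: "nat \<Rightarrow> ('a::euclidean_space \<Rightarrow> 'a \<Rightarrow> 'b::euclidean_space)
   \<Rightarrow> (form \<Rightarrow> 'a) \<Rightarrow> (form \<Rightarrow> 'b) \<Rightarrow> bool" where
  "carnot_morph_free n br pi1 pi2 \<longleftrightarrow> lin_on (Lam n 1) pi1 \<and> lin_on (Lam n 2) pi2
     \<and> (\<forall>\<theta>\<in>Lam n 1. \<forall>\<theta>'\<in>Lam n 1. pi2 (wedge \<theta> \<theta>') = br (pi1 \<theta>) (pi1 \<theta>'))"

definition surj_carnot_morph_free :: "nat \<Rightarrow> ('a::euclidean_space \<Rightarrow> 'a \<Rightarrow> 'b::euclidean_space)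
   \<Rightarrow> (form \<Rightarrow> 'a) \<Rightarrow> (form \<Rightarrow> 'b) \<Rightarrow> bool" where
  "surj_carnot_morph_free n br pi1 pi2 \<longleftrightarrow> carnot_morph_free n br pi1 pi2
     \<and> pi1 ` Lam n 1 = UNIV \<and> pi2 ` Lam n 2 = UNIV"

definition ker_morph :: "nat \<Rightarrow> (form \<Rightarrow> 'a::real_vector) \<Rightarrow> (form \<Rightarrow> 'b::real_vector)
   \<Rightarrow> (form \<times> form) set" where
  "ker_morph n pi1 pi2 = {(\<theta>, \<omega>). \<theta> \<in> Lam n 1 \<and> \<omega> \<in> Lam n 2 \<and> pi1 \<theta> = 0 \<and> pi2 \<omega> = 0}"

definition Anh12 :: "nat \<Rightarrow> form \<Rightarrow> (form \<times> form) set" where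
  "Anh12 n \<eta> = {(\<theta>, \<omega>). \<theta> \<in> Lam n 1 \<and> \<omega> \<in> Lam n 2
      \<and> wedge \<theta> \<eta> = zero_form \<and> wedge \<omega> \<eta> = zero_form}"

definition LamPi :: "nat \<Rightarrow> nat \<Rightarrow> (form \<Rightarrow> 'a::real_vector) \<Rightarrow> (form \<Rightarrow> 'b::real_vector)
   \<Rightarrow> form set" where
  "LamPi n k pi1 pi2 = {\<eta> \<in> Lam n k. ker_morph n pi1 pi2 \<subseteq> Anh12 n \<eta>}"

end

theory Submission
  imports Defs
begin


definition aff1 :: "(real \<Rightarrow> real) \<Rightarrow> bool" where
  "aff1 \<phi> \<longleftrightarrow> (\<exists>a b. \<forall>t. \<phi> t = a + b * t)"

lemma aff1_eval: "aff1 \<phi> \<Longrightarrow> \<phi> t = \<phi> 0 + (\<phi> 1 - \<phi> 0) * t"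
  unfolding aff1_def by auto

lemma aff1_mid: "aff1 \<phi> \<Longrightarrow> \<phi> 0 = (\<phi> 1 + \<phi> (-1)) / 2"
  unfolding aff1_def by auto

lemma aff1_third: "aff1 \<phi> \<Longrightarrow> \<phi> 0 = (\<phi> 1 + 3 * \<phi> (-1/3)) / 4"
  unfolding aff1_def by auto

lemma aff1_comb: "aff1 \<phi> \<Longrightarrow> aff1 \<psi> \<Longrightarrow> aff1 (\<lambda>t. \<alpha> * \<phi> t + \<beta> * \<psi> t + \<gamma>)"
  unfolding aff1_def
proof (elim exE)
  fix a b a' b' assume A: "\<forall>t. \<phi> t = a + b * t" and B: "\<forall>t. \<psi> t = a' + b' * t"
  show "\<exists>a b. \<forall>t. \<alpha> * \<phi> t + \<beta> * \<psi> t + \<gamma> = a + b * t"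
    by (rule exI[of _ "\<alpha>*a + \<beta>*a' + \<gamma>"], rule exI[of _ "\<alpha>*b+\<beta>*b'"])
       (simp add: A B algebra_simps)
qed

lemma aff1_quad: "aff1 (\<lambda>t. \<alpha> + \<beta> * t + \<gamma> * t^2) \<Longrightarrow> \<gamma> = 0"
  unfolding aff1_def
proof (elim exE)
  fix a b assume A: "\<forall>t. \<alpha> + \<beta> * t + \<gamma> * t^2 = a + b * t"
  from A[rule_format, of 0] A[rule_format, of 1] A[rule_format, of "-1"]
  show "\<gamma> = 0" by (simp add: power2_eq_square) 
qed

lemma aff_lines:
  fixes h :: "'v::real_vector \<Rightarrow> real"
  assumes A: "\<And>x y. aff1 (\<lambda>t. h (x + t *\<^sub>R y))"
  shows "\<exists>c L. linear L \<and> (\<forall>x. h x = c + L x)"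
proof -
  define L where "L x = h x - h 0" for x
  have hom: "L (t *\<^sub>R x) = t * L x" for t x
    using aff1_eval[OF A[of 0 x], of t] by (simp add: L_def)
  have add: "L (x + y) = L x + L y" for x y
  proof -
    define m where "m = (1/2::real) *\<^sub>R (x + y)"
    have "h (x + (1/2) *\<^sub>R (y - x)) = h x + (h y - h x) * (1/2)"
      using aff1_eval[OF A[of x "y - x"], of "1/2"] by simp
    moreover have "x + (1/2) *\<^sub>R (y - x) = m"
      unfolding m_def by (simp add: algebra_simps flip: scaleR_add_left)
    ultimately have e1: "h m = h x + (h y - h x) * (1/2)"
      by simp
    have e2: "h m - h 0 = (1/2) * (h (x + y) - h 0)"
      using hom[of "1/2" "x+y"] unfolding m_def by (simp add: L_def)
    show ?thesis unfolding L_def using e1 e2 by argo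
  qed
  have "linear L" by (rule linearI) (simp_all add: add hom)
  then show ?thesis by (intro exI[of _ "h 0"] exI[of _ L]) (simp add: L_def)
qed

definition dv :: "'b::real_vector \<Rightarrow> ('a \<times> 'b \<Rightarrow> real) \<Rightarrow> ('a \<times> 'b \<Rightarrow> real)" where
  "dv \<zeta> g = (\<lambda>p. g (fst p, snd p + \<zeta>) - g p)"

primrec dl :: "'b::real_vector list \<Rightarrow> ('a \<times> 'b \<Rightarrow> real) \<Rightarrow> ('a \<times> 'b \<Rightarrow> real)" where
  "dl [] g = g"
| "dl (\<zeta> # L) g = dv \<zeta> (dl L g)"

lemma dv_comm: "dv a (dv b g) = dv b (dv a g)"
  unfolding dv_def by (auto simp: algebra_simps)

lemma dv_dl: "dv a (dl L g) = dl L (dv a g)"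
  by (induct L) (simp_all add: dv_comm)

lemma dl_remove: "\<zeta> \<in> set L \<Longrightarrow> dl L g = dl (remove1 \<zeta> L) (dv \<zeta> g)"
proof (induct L)
  case Nil then show ?case by simp
next
  case (Cons b L)
  show ?case
  proof (cases "b = \<zeta>")
    case True then show ?thesis by (simp add: dv_dl)
  next
    case False then show ?thesis using Cons by simp
  qed
qed

lemma dl_zero: "dl L (\<lambda>p. 0) = (\<lambda>p. 0)"
  by (induct L) (simp_all add: dv_def)

lemma bilinearI:
  assumes "\<And>x y z. \<Phi> (x + y) z = \<Phi> x z + \<Phi> y z"
    and "\<And>x y z. \<Phi> x (y + z) = \<Phi> x y + \<Phi> x z"
    and "\<And>c x y. \<Phi> (c *\<^sub>R x) y = c *\<^sub>R \<Phi> x y"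
    and "\<And>c x y. \<Phi> x (c *\<^sub>R y) = c *\<^sub>R \<Phi> x y"
  shows "bilinear \<Phi>"
  unfolding bilinear_def using assms by (auto intro!: linearI)

locale c2 =
  fixes br :: "'a::euclidean_space \<Rightarrow> 'a \<Rightarrow> 'b::euclidean_space"
  assumes s2: "step2_carnot br"
begin

lemma bil: "bilinear br" using s2 unfolding step2_carnot_def by blast
lemma skew: "br x y = - br y x" using s2 unfolding step2_carnot_def by blast
lemma br_self: "br x x = 0"
proof -
  have "br x x + br x x = 0" using skew[of x x] eq_neg_iff_add_eq_0 by blast
  then have "2 *\<^sub>R br x x = 0" by (simp add: scaleR_2)
  then show ?thesis by simp
qed
lemma spn: "span {br x y | x y. True} = UNIV" using s2 unfolding step2_carnot_def by blast

lemma br_add_l: "br (x + y) w = br x w + br y w" using bil by (rule bilinear_ladd)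
lemma br_add_r: "br w (x + y) = br w x + br w y" using bil by (rule bilinear_radd)
lemma br_diff_l: "br (x - y) w = br x w - br y w" using bil by (rule bilinear_lsub)
lemma br_diff_r: "br w (x - y) = br w x - br w y" using bil by (rule bilinear_rsub)
lemma br_scale_l: "br (c *\<^sub>R x) w = c *\<^sub>R br x w" using bil by (rule bilinear_lmul)
lemma br_scale_r: "br w (c *\<^sub>R x) = c *\<^sub>R br w x" using bil by (rule bilinear_rmul)
lemma br_neg_l: "br (- x) w = - br x w" using bil by (rule bilinear_lneg)
lemma br_neg_r: "br w (- x) = - br w x" using bil by (rule bilinear_rneg)
lemma br_zero_l: "br 0 w = 0" using bil by (rule bilinear_lzero)
lemma br_zero_r: "br w 0 = 0" using bil by (rule bilinear_rzero)

lemmas brs = br_add_l br_add_r br_diff_l br_diff_r br_scale_l br_scale_r br_neg_l br_neg_r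
  br_zero_l br_zero_r br_self

lemma hline: "h_affine br f \<Longrightarrow> aff1 (\<lambda>t. f (x + t *\<^sub>R y, z + t *\<^sub>R br x y))"
  unfolding h_affine_def aff1_def
  by (drule spec[of _ "(x,z)"], drule spec[of _ y]) (simp add: carnot_mult_def br_scale_r)

lemma veq: "(\<And>i. i \<in> Basis \<Longrightarrow> inner a i = inner b i) \<Longrightarrow> a = b"
  by (rule euclidean_eqI) 

lemma vert:
  assumes hf: "h_affine br f"
  shows "aff1 (\<lambda>c. f (x, z + c *\<^sub>R br u v))"
proof -
  have L: "f (x, z + c *\<^sub>R br u v) =
     (f ((x + u) + c *\<^sub>R v, (z + br x u) + c *\<^sub>R br (x + u) v)
      + f ((x - u) + c *\<^sub>R (- v), (z - br x u) + c *\<^sub>R br (x - u) (- v))) / 2" for c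
  proof -
    define \<phi> where "\<phi> t = f (x + t *\<^sub>R (u + c *\<^sub>R v), (z + c *\<^sub>R br u v) + t *\<^sub>R br x (u + c *\<^sub>R v))" for t
    have A: "aff1 \<phi>" unfolding \<phi>_def by (rule hline[OF hf])
    have 0: "\<phi> 0 = f (x, z + c *\<^sub>R br u v)" unfolding \<phi>_def by simp
    have 1: "\<phi> 1 = f ((x + u) + c *\<^sub>R v, (z + br x u) + c *\<^sub>R br (x + u) v)"
      unfolding \<phi>_def by (rule arg_cong[where f=f]) (simp add: brs algebra_simps)
    have 2: "\<phi> (-1) = f ((x - u) + c *\<^sub>R (- v), (z - br x u) + c *\<^sub>R br (x - u) (- v))"
      unfolding \<phi>_def by (rule arg_cong[where f=f]) (simp add: brs algebra_simps)
    show ?thesis using aff1_mid[OF A] 0 1 2 by simp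
  qed
  have eq: "(\<lambda>c. f (x, z + c *\<^sub>R br u v)) = (\<lambda>c. (1/2) * f ((x + u) + c *\<^sub>R v, (z + br x u) + c *\<^sub>R br (x + u) v)
       + (1/2) * f ((x - u) + c *\<^sub>R (- v), (z - br x u) + c *\<^sub>R br (x - u) (- v)) + 0)"
    by (rule ext) (subst L, simp)
  show ?thesis unfolding eq
    by (rule aff1_comb; rule hline[OF hf])
qed

lemma horiz:
  assumes hf: "h_affine br f"
  shows "aff1 (\<lambda>t. f (x + t *\<^sub>R y, z))"
proof -
  have yx: "br y x = - br x y" by (rule skew)
  have L: "f (x + t *\<^sub>R y, z) =
     (f ((2::real) *\<^sub>R x + t *\<^sub>R (-2 *\<^sub>R y), z + t *\<^sub>R br (2 *\<^sub>R x) (-2 *\<^sub>R y))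
      + 3 * f ((2/3::real) *\<^sub>R x + t *\<^sub>R (2 *\<^sub>R y), z + t *\<^sub>R br ((2/3) *\<^sub>R x) (2 *\<^sub>R y))) / 4" for t
  proof -
    define \<phi> where "\<phi> s = f ((x + t *\<^sub>R y) + s *\<^sub>R (x - (3*t) *\<^sub>R y), z + s *\<^sub>R br (x + t *\<^sub>R y) (x - (3*t) *\<^sub>R y))" for s
    have A: "aff1 \<phi>" unfolding \<phi>_def by (rule hline[OF hf])
    have 0: "\<phi> 0 = f (x + t *\<^sub>R y, z)" unfolding \<phi>_def by simp
    have 1: "\<phi> 1 = f ((2::real) *\<^sub>R x + t *\<^sub>R (-2 *\<^sub>R y), z + t *\<^sub>R br (2 *\<^sub>R x) (-2 *\<^sub>R y))"
      unfolding \<phi>_def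
      apply (rule arg_cong[where f=f])
      apply (simp only: prod.inject brs yx)
      apply (intro conjI; rule veq)
       apply (simp_all only: inner_simps inner_minus_left inner_zero_left)
       apply (simp_all add: algebra_simps)
      done
    have 2: "\<phi> (-1/3) = f ((2/3::real) *\<^sub>R x + t *\<^sub>R (2 *\<^sub>R y), z + t *\<^sub>R br ((2/3) *\<^sub>R x) (2 *\<^sub>R y))"
      unfolding \<phi>_def
      apply (rule arg_cong[where f=f])
      apply (simp only: prod.inject brs yx)
      apply (intro conjI; rule veq)
       apply (simp_all only: inner_simps inner_minus_left inner_zero_left)
       apply (simp_all add: algebra_simps)
      done
    show ?thesis using aff1_third[OF A] 0 1 2 by simp
  qed
  have eq: "(\<lambda>t. f (x + t *\<^sub>R y, z)) = (\<lambda>t. (1/4) * f ((2::real) *\<^sub>R x + t *\<^sub>R (-2 *\<^sub>R y), z + t *\<^sub>R br (2 *\<^sub>R x) (-2 *\<^sub>R y))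
       + (3/4) * f ((2/3::real) *\<^sub>R x + t *\<^sub>R (2 *\<^sub>R y), z + t *\<^sub>R br ((2/3) *\<^sub>R x) (2 *\<^sub>R y)) + 0)"
    by (rule ext) (subst L, simp)
  show ?thesis unfolding eq
    by (rule aff1_comb; rule hline[OF hf])
qed


lemma affine_h: "affine_fun g \<Longrightarrow> h_affine br g"
  unfolding affine_fun_def h_affine_def
proof (elim exE conjE, intro allI)
  fix c L p y assume L: "linear L" and g: "\<forall>p. g p = c + L p"
  have e: "carnot_mult br p (t *\<^sub>R y, 0) = p + t *\<^sub>R (y, br (fst p) y)" for t
    by (cases p) (simp add: carnot_mult_def br_scale_r)
  have "g (carnot_mult br p (t *\<^sub>R y, 0)) = (c + L p) + L (y, br (fst p) y) * t" for t
  proof -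
    have "g (carnot_mult br p (t *\<^sub>R y, 0)) = c + (L p + t *\<^sub>R L (y, br (fst p) y))"
      by (simp only: g e linear_add[OF L] linear_scale[OF L])
    then show ?thesis by simp
  qed
  then show "\<exists>a b. \<forall>t. g (carnot_mult br p (t *\<^sub>R y, 0)) = a + b * t" by blast
qed

lemma h_affine_diff: "h_affine br f \<Longrightarrow> h_affine br g \<Longrightarrow> h_affine br (\<lambda>p. f p - g p)"
  unfolding h_affine_def
proof (intro allI)
  fix p y assume F: "\<forall>p y. \<exists>a b. \<forall>t. f (carnot_mult br p (t *\<^sub>R y, 0)) = a + b * t"
    and G: "\<forall>p y. \<exists>a b. \<forall>t. g (carnot_mult br p (t *\<^sub>R y, 0)) = a + b * t"
  obtain a b where A: "\<forall>t. f (carnot_mult br p (t *\<^sub>R y, 0)) = a + b * t" using F by blast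
  obtain a' b' where B: "\<forall>t. g (carnot_mult br p (t *\<^sub>R y, 0)) = a' + b' * t" using G by blast
  show "\<exists>a b. \<forall>t. f (carnot_mult br p (t *\<^sub>R y, 0)) - g (carnot_mult br p (t *\<^sub>R y, 0)) = a + b * t"
    by (rule exI[of _ "a - a'"], rule exI[of _ "b - b'"]) (simp add: A B algebra_simps)
qed

lemma h_affine_vshift: "h_affine br g \<Longrightarrow> h_affine br (\<lambda>p. g (fst p, snd p + \<zeta>))"
  unfolding h_affine_def
proof (intro allI)
  fix p y assume G: "\<forall>p y. \<exists>a b. \<forall>t. g (carnot_mult br p (t *\<^sub>R y, 0)) = a + b * t"
  obtain a b where A: "\<forall>t. g (carnot_mult br (fst p, snd p + \<zeta>) (t *\<^sub>R y, 0)) = a + b * t" using G by blast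
  have e: "(fst (carnot_mult br p (t *\<^sub>R y, 0)), snd (carnot_mult br p (t *\<^sub>R y, 0)) + \<zeta>)
     = carnot_mult br (fst p, snd p + \<zeta>) (t *\<^sub>R y, 0)" for t
    by (simp add: carnot_mult_def algebra_simps)
  show "\<exists>a b. \<forall>t. g (fst (carnot_mult br p (t *\<^sub>R y, 0)), snd (carnot_mult br p (t *\<^sub>R y, 0)) + \<zeta>) = a + b * t"
    by (rule exI[of _ a], rule exI[of _ b]) (simp only: e A, simp)
qed

lemma dv_h: "h_affine br g \<Longrightarrow> h_affine br (dv \<zeta> g)"
  unfolding dv_def by (rule h_affine_diff[OF h_affine_vshift])

lemma dl_h: "h_affine br g \<Longrightarrow> h_affine br (dl L g)"
  by (induct L) (simp_all add: dv_h)

lemma vstep: "h_affine br g \<Longrightarrow> g (x, w + c *\<^sub>R br u v) = g (x, w) + c * dv (br u v) g (x, w)"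
  using aff1_eval[OF vert[of g x w u v], of c] by (simp add: dv_def)

lemma dvdv: assumes hg: "h_affine br g" shows "dv (br u v) (dv (br u v) g) = (\<lambda>p. 0)"
proof (rule ext)
  fix p :: "'a \<times> 'b"
  obtain x z where p: "p = (x, z)" by (cases p)
  have a: "g (x, z + 2 *\<^sub>R br u v) = g (x, z) + 2 * (g (x, z + 1 *\<^sub>R br u v) - g (x, z))"
    using aff1_eval[OF vert[OF hg, of x z u v], of 2] by simp
  have "z + 2 *\<^sub>R br u v = z + br u v + br u v" by (simp add: scaleR_2 algebra_simps)
  then show "dv (br u v) (dv (br u v) g) p = 0"
    using a by (simp add: dv_def p add.assoc)
qed

lemma affine_zero: "affine_fun (\<lambda>p. 0)"
  unfolding affine_fun_def by (rule exI[of _ 0], rule exI[of _ "\<lambda>p. 0"]) (simp add: linear_zero)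


lemma lin_pair: "linear M \<Longrightarrow> M (x, w) = M (x, 0) + M (0, w)"
  using linear_add[of M "(x,0)" "(0,w)"] by simp

lemma lin_pair_add1: "linear M \<Longrightarrow> M (x + y, 0) = M (x, 0) + M (y, 0)"
  using linear_add[of M "(x,0)" "(y,0)"] by simp
lemma lin_pair_add2: "linear M \<Longrightarrow> M (0, x + y) = M (0, x) + M (0, y)"
  using linear_add[of M "(0,x)" "(0,y)"] by simp
lemma lin_pair_scale1: "linear M \<Longrightarrow> M (c *\<^sub>R x, 0) = c *\<^sub>R M (x, 0)"
  using linear_scale[of M c "(x,0)"] by simp
lemma lin_pair_scale2: "linear M \<Longrightarrow> M (0, c *\<^sub>R x) = c *\<^sub>R M (0, x)"
  using linear_scale[of M c "(0,x)"] by simp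

lemma core:
  fixes g :: "'a \<times> 'b \<Rightarrow> real"
  assumes hg: "h_affine br g"
    and nP: "\<And>\<Phi>::'a \<Rightarrow> 'b \<Rightarrow> real. bilinear \<Phi> \<Longrightarrow> (\<forall>x y. \<Phi> y (br x y) = 0) \<Longrightarrow> (\<forall>x z. \<Phi> x z = 0)"
    and Bi: "independent B" and Bs: "span B = UNIV" and Bb: "B \<subseteq> {br u v | u v. True}"
    and D: "\<And>\<zeta>. \<zeta> \<in> B \<Longrightarrow> affine_fun (dv \<zeta> g)"
  shows "affine_fun g"
proof -
  have finB: "finite B" using Bi by (rule eucl.finiteI_independent)
  define cc where "cc \<zeta> z = representation B z \<zeta>" for \<zeta> z
  have cc_add: "cc \<zeta> (z1 + z2) = cc \<zeta> z1 + cc \<zeta> z2" for \<zeta> z1 z2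
    unfolding cc_def using real_vector.representation_add[OF Bi, of z2 z1] Bs by simp
  have cc_scale: "cc \<zeta> (c *\<^sub>R z) = c * cc \<zeta> z" for \<zeta> c z
    unfolding cc_def using real_vector.representation_scale[OF Bi, of z c] Bs by simp
  define sF where "sF F z = (\<Sum>\<zeta>\<in>F. cc \<zeta> z *\<^sub>R \<zeta>)" for F z
  have sF_add: "sF F (z1 + z2) = sF F z1 + sF F z2" for F z1 z2
    unfolding sF_def by (simp add: cc_add scaleR_add_left sum.distrib)
  have sF_scale: "sF F (c *\<^sub>R z) = c *\<^sub>R sF F z" for F c z
    unfolding sF_def by (simp add: cc_scale scaleR_sum_right)
  have claim: "\<exists>c0 L (\<Phi>::'a \<Rightarrow> 'b \<Rightarrow> real) (Q::'b \<Rightarrow> 'b \<Rightarrow> real). linear L \<and> bilinear \<Phi> \<and> bilinear Q \<and>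
        (\<forall>x z. g (x, sF F z) = c0 + L (x, z) + \<Phi> x z + Q z z)" if "F \<subseteq> B" for F
    using finite_subset[OF that finB] that
  proof (induct F rule: finite_subset_induct)
    case empty
    have "\<exists>c L. linear L \<and> (\<forall>x. g (x, 0) = c + L x)"
      by (rule aff_lines) (rule horiz[OF hg])
    then obtain c0 L0 where L0: "linear L0" and g0: "\<And>x. g (x, 0) = c0 + L0 x" by blast
    have "linear (\<lambda>p. L0 (fst p))"
      by (rule linearI) (simp_all add: linear_add[OF L0] linear_scale[OF L0])
    moreover have "bilinear (\<lambda>(x::'a) (z::'b). 0::real)" by (rule bilinearI) simp_all
    moreover have "bilinear (\<lambda>(x::'b) (z::'b). 0::real)" by (rule bilinearI) simp_all
    ultimately show ?case
      by (intro exI[of _ c0] exI[of _ "\<lambda>p. L0 (fst p)"] exI[of _ "\<lambda>x z. 0::real"] conjI)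
         (simp_all add: sF_def g0)
  next
    case (insert \<zeta> F)
    then obtain c0 L \<Phi> Q where L: "linear L" and Phi: "bilinear \<Phi>" and Q: "bilinear Q"
      and gF: "\<And>x z. g (x, sF F z) = c0 + L (x, z) + \<Phi> x z + Q z z" by blast
    from insert obtain u v where uv: "\<zeta> = br u v" using Bb by blast
    obtain e M where M: "linear M" and dM: "\<And>p. dv \<zeta> g p = e + M p"
      using D[OF \<open>\<zeta> \<in> B\<close>] unfolding affine_fun_def by blast
    define L' where "L' p = L p + cc \<zeta> (snd p) * e" for p
    define \<Phi>' where "\<Phi>' x z = \<Phi> x z + cc \<zeta> z * M (x, 0)" for x z
    define Q' where "Q' z w = Q z w + cc \<zeta> z * M (0, sF F w)" for z w
    have "linear L'"
      by (rule linearI) (simp_all add: L'_def linear_add[OF L] linear_scale[OF L] cc_add cc_scale algebra_simps)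
    moreover have "bilinear \<Phi>'"
      by (rule bilinearI) (simp_all add: \<Phi>'_def bilinear_ladd[OF Phi] bilinear_radd[OF Phi]
          bilinear_lmul[OF Phi] bilinear_rmul[OF Phi] lin_pair_add1[OF M] lin_pair_scale1[OF M]
          cc_add cc_scale algebra_simps)
    moreover have "bilinear Q'"
      by (rule bilinearI) (simp_all add: Q'_def bilinear_ladd[OF Q] bilinear_radd[OF Q]
          bilinear_lmul[OF Q] bilinear_rmul[OF Q] lin_pair_add2[OF M] lin_pair_scale2[OF M]
          sF_add sF_scale cc_add cc_scale algebra_simps)
    moreover have "g (x, sF (insert \<zeta> F) z) = c0 + L' (x, z) + \<Phi>' x z + Q' z z" for x z
    proof -
      have "sF (insert \<zeta> F) z = sF F z + cc \<zeta> z *\<^sub>R br u v"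
        unfolding sF_def using insert uv by (simp add: add.commute)
      then have "g (x, sF (insert \<zeta> F) z) = g (x, sF F z) + cc \<zeta> z * dv \<zeta> g (x, sF F z)"
        using vstep[OF hg, of x "sF F z" "cc \<zeta> z" u v] uv by simp
      also have "\<dots> = c0 + L' (x, z) + \<Phi>' x z + Q' z z"
        by (simp add: gF dM lin_pair[OF M, of x "sF F z"] L'_def \<Phi>'_def Q'_def algebra_simps)
      finally show ?thesis .
    qed
    ultimately show ?case by blast
  qed
  from claim[OF order_refl] obtain c0 L \<Phi> Q where L: "linear L" and Phi: "bilinear \<Phi>"
    and Q: "bilinear (Q::'b \<Rightarrow> 'b \<Rightarrow> real)"
    and gB: "\<And>x z. g (x, sF B z) = c0 + L (x, z) + \<Phi> x z + Q z z" by blast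
  have sFB: "sF B z = z" for z
    unfolding sF_def cc_def using real_vector.sum_representation_eq[OF Bi _ finB order_refl, of z] Bs by simp
  have gE: "g (x, z) = c0 + L (x, z) + \<Phi> x z + Q z z" for x z
    using gB[of x z] by (simp add: sFB)
  have quad: "\<Phi> y (br x y) + Q (br x y) (br x y) = 0" for x y
  proof -
    define w where "w = br x y"
    have "aff1 (\<lambda>t. g (x + t *\<^sub>R y, 0 + t *\<^sub>R w))" unfolding w_def by (rule hline[OF hg])
    moreover have "(\<lambda>t. g (x + t *\<^sub>R y, 0 + t *\<^sub>R w)) =
       (\<lambda>t. (c0 + L (x, 0) + \<Phi> x 0) + (L (y, w) + \<Phi> x w + \<Phi> y 0) * t + (\<Phi> y w + Q w w) * t^2)"
    proof (rule ext)
      fix t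
      have "L (x + t *\<^sub>R y, t *\<^sub>R w) = L (x, 0) + t * L (y, w)"
        using linear_add[OF L, of "(x,0)" "t *\<^sub>R (y, w)"] linear_scale[OF L, of t "(y,w)"] by simp
      then show "g (x + t *\<^sub>R y, 0 + t *\<^sub>R w) =
         (c0 + L (x, 0) + \<Phi> x 0) + (L (y, w) + \<Phi> x w + \<Phi> y 0) * t + (\<Phi> y w + Q w w) * t^2"
        by (simp add: gE bilinear_ladd[OF Phi] bilinear_radd[OF Phi] bilinear_lmul[OF Phi]
            bilinear_rmul[OF Phi] bilinear_lmul[OF Q] bilinear_rmul[OF Q] bilinear_rzero[OF Phi]
            power2_eq_square algebra_simps)
    qed
    ultimately have "aff1 (\<lambda>t. (c0 + L (x, 0) + \<Phi> x 0) + (L (y, w) + \<Phi> x w + \<Phi> y 0) * t + (\<Phi> y w + Q w w) * t^2)"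
      by simp
    then show ?thesis unfolding w_def by (rule aff1_quad)
  qed
  have both: "\<Phi> y (br x y) = 0 \<and> Q (br x y) (br x y) = 0" for x y
  proof -
    have a: "\<Phi> y (br x y) + Q (br x y) (br x y) = 0" by (rule quad)
    have "\<Phi> y (br (2 *\<^sub>R x) y) + Q (br (2 *\<^sub>R x) y) (br (2 *\<^sub>R x) y) = 0" by (rule quad)
    then have b: "2 * \<Phi> y (br x y) + 4 * Q (br x y) (br x y) = 0"
      by (simp add: br_scale_l bilinear_rmul[OF Phi] bilinear_lmul[OF Q] bilinear_rmul[OF Q])
    from a b show ?thesis by linarith
  qed
  have Phi0: "\<Phi> x z = 0" for x z
    using nP[OF Phi] both by blast
  have Qsym: "Q w (br x0 y) + Q (br x0 y) w = 0" for x0 y w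
  proof -
    define \<Phi>2 where "\<Phi>2 y w = Q w (br x0 y) + Q (br x0 y) w" for y w
    have "bilinear \<Phi>2"
      by (rule bilinearI) (simp_all add: \<Phi>2_def bilinear_ladd[OF Q] bilinear_radd[OF Q]
          bilinear_lmul[OF Q] bilinear_rmul[OF Q] br_add_r br_scale_r algebra_simps)
    moreover have "\<forall>x y. \<Phi>2 y (br x y) = 0"
    proof (intro allI)
      fix x y
      have "Q (br (x + x0) y) (br (x + x0) y) = 0" using both by blast
      then have "Q (br x y) (br x y) + Q (br x y) (br x0 y) + Q (br x0 y) (br x y) + Q (br x0 y) (br x0 y) = 0"
        by (simp add: br_add_l bilinear_ladd[OF Q] bilinear_radd[OF Q] algebra_simps)
      then show "\<Phi>2 y (br x y) = 0" using both[of y x] both[of y x0] by (simp add: \<Phi>2_def)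
    qed
    ultimately show ?thesis using nP[of \<Phi>2] by (simp add: \<Phi>2_def)
  qed
  have Q0: "Q w w = 0" for w
  proof -
    have lin: "linear (\<lambda>v. Q w v + Q v w)"
      by (rule linearI) (simp_all add: bilinear_ladd[OF Q] bilinear_radd[OF Q]
          bilinear_lmul[OF Q] bilinear_rmul[OF Q] algebra_simps)
    have "Q w w + Q w w = 0"
      by (rule real_vector.linear_eq_0_on_span[OF lin, of "{br u v | u v. True}"]) (use Qsym spn in auto)
    then show ?thesis by simp
  qed
  show ?thesis unfolding affine_fun_def
    by (rule exI[of _ c0], rule exI[of _ L]) (simp add: L gE Phi0 Q0)
qed


lemma h_of_nP:
  fixes f :: "'a \<times> 'b \<Rightarrow> real"
  assumes nP: "\<And>\<Phi>::'a \<Rightarrow> 'b \<Rightarrow> real. bilinear \<Phi> \<Longrightarrow> (\<forall>x y. \<Phi> y (br x y) = 0) \<Longrightarrow> (\<forall>x z. \<Phi> x z = 0)"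
    and hf: "h_affine br f"
  shows "affine_fun f"
proof -
  obtain B where BS: "B \<subseteq> {br u v | u v. True}" and Bi: "independent B"
    and SB: "{br u v | u v. True} \<subseteq> span B"
    using real_vector.maximal_independent_subset by blast
  have Bs: "span B = UNIV"
    using real_vector.span_mono[OF SB] spn real_vector.span_span[of B] by auto
  have finB: "finite B" using Bi by (rule eucl.finiteI_independent)
  have main: "\<forall>L. distinct L \<and> set L \<subseteq> B \<and> card B - length L = n \<longrightarrow> affine_fun (dl L f)" for n
  proof (induct n rule: less_induct)
    case (less n)
    show ?case
    proof (intro allI impI)
      fix L assume LL: "distinct L \<and> set L \<subseteq> B \<and> card B - length L = n"
      show "affine_fun (dl L f)"
      proof (rule core[OF dl_h[OF hf] nP Bi Bs BS])
        fix \<zeta> assume z: "\<zeta> \<in> B"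
        then obtain u v where uv: "\<zeta> = br u v" using BS by blast
        show "affine_fun (dv \<zeta> (dl L f))"
        proof (cases "\<zeta> \<in> set L")
          case True
          have "dv \<zeta> (dl L f) = dl (remove1 \<zeta> L) (dv \<zeta> (dv \<zeta> f))"
            by (simp add: dv_dl dl_remove[OF True])
          also have "\<dots> = (\<lambda>p. 0)" by (simp add: uv dvdv[OF hf] dl_zero)
          finally show ?thesis by (simp add: affine_zero)
        next
          case False
          have "length L = card (set L)" using LL by (simp add: distinct_card)
          moreover have "set L \<subset> B" using LL False z by blast
          ultimately have "length L < card B" using psubset_card_mono[OF finB] by simp
          moreover have n: "card B - length L = n" using LL by blast
          ultimately have lt: "card B - length (\<zeta> # L) < n" by simp
          have "distinct (\<zeta> # L) \<and> set (\<zeta> # L) \<subseteq> B" using LL False z by simp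
          then have "affine_fun (dl (\<zeta> # L) f)" using less[OF lt] by blast
          then show ?thesis by simp
        qed
      qed
    qed
  qed
  show ?thesis using main[of "card B", rule_format, of "[]"] by simp
qed

lemma AH_iff:
  "({f. h_affine br f} = {f::'a \<times> 'b \<Rightarrow> real. affine_fun f}) \<longleftrightarrow>
   (\<forall>\<Phi>::'a \<Rightarrow> 'b \<Rightarrow> real. bilinear \<Phi> \<longrightarrow> (\<forall>x y. \<Phi> y (br x y) = 0) \<longrightarrow> (\<forall>x z. \<Phi> x z = 0))"
proof
  assume nP: "\<forall>\<Phi>::'a \<Rightarrow> 'b \<Rightarrow> real. bilinear \<Phi> \<longrightarrow> (\<forall>x y. \<Phi> y (br x y) = 0) \<longrightarrow> (\<forall>x z. \<Phi> x z = 0)"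
  show "{f. h_affine br f} = {f. affine_fun f}"
  proof (intro set_eqI iffI; simp)
    fix f :: "'a \<times> 'b \<Rightarrow> real" assume "h_affine br f"
    then show "affine_fun f" using h_of_nP[of f] nP by blast
  next
    fix f :: "'a \<times> 'b \<Rightarrow> real" assume "affine_fun f"
    then show "h_affine br f" by (rule affine_h)
  qed
next
  assume eq: "{f. h_affine br f} = {f::'a \<times> 'b \<Rightarrow> real. affine_fun f}"
  show "\<forall>\<Phi>::'a \<Rightarrow> 'b \<Rightarrow> real. bilinear \<Phi> \<longrightarrow> (\<forall>x y. \<Phi> y (br x y) = 0) \<longrightarrow> (\<forall>x z. \<Phi> x z = 0)"
  proof (intro allI impI)
    fix \<Phi> :: "'a \<Rightarrow> 'b \<Rightarrow> real" and x z
    assume Phi: "bilinear \<Phi>" and c: "\<forall>x y. \<Phi> y (br x y) = 0"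
    define f where "f p = \<Phi> (fst p) (snd p)" for p
    have "h_affine br f"
      unfolding h_affine_def
    proof (intro allI)
      fix p y
      have "f (carnot_mult br p (t *\<^sub>R y, 0)) = f p + (\<Phi> y (snd p) + \<Phi> (fst p) (br (fst p) y)) * t" for t
        using c by (simp add: f_def carnot_mult_def bilinear_ladd[OF Phi] bilinear_radd[OF Phi]
            bilinear_lmul[OF Phi] bilinear_rmul[OF Phi] br_scale_r algebra_simps)
      then show "\<exists>a b. \<forall>t. f (carnot_mult br p (t *\<^sub>R y, 0)) = a + b * t" by blast
    qed
    then have "affine_fun f" using eq by blast
    then obtain c0 L where L: "linear L" and fL: "\<And>p. f p = c0 + L p"
      unfolding affine_fun_def by blast
    have "c0 = 0" using fL[of "(0,0)"] linear_0[OF L] by (simp add: f_def bilinear_lzero[OF Phi] zero_prod_def)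
    have "\<Phi> x z = L (x, 0) + L (0, z)" using fL[of "(x,z)"] lin_pair[OF L, of x z] \<open>c0 = 0\<close>
      by (simp add: f_def)
    moreover have "L (x, 0) = 0" using fL[of "(x,0)"] \<open>c0 = 0\<close> by (simp add: f_def bilinear_rzero[OF Phi])
    moreover have "L (0, z) = 0" using fL[of "(0,z)"] \<open>c0 = 0\<close> by (simp add: f_def bilinear_lzero[OF Phi])
    ultimately show "\<Phi> x z = 0" by simp
  qed
qed

end



definition ninv :: "nat set \<Rightarrow> nat set \<Rightarrow> nat" where
  "ninv I J = card {(i, j). i \<in> I \<and> j \<in> J \<and> j < i}"

lemma wsign_inv: "wsign I J = (-1) ^ ninv I J"
  by (simp add: wsign_def ninv_def)

lemma inv_set_sub: "{(i, j). i \<in> I \<and> j \<in> J \<and> j < i} \<subseteq> I \<times> J" by auto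

lemma inv_union_l:
  assumes "finite A" "finite B" "finite C" "A \<inter> B = {}"
  shows "ninv (A \<union> B) C = ninv A C + ninv B C"
proof -
  have "{(i, j). i \<in> A \<union> B \<and> j \<in> C \<and> j < i} =
        {(i, j). i \<in> A \<and> j \<in> C \<and> j < i} \<union> {(i, j). i \<in> B \<and> j \<in> C \<and> j < i}" by auto
  moreover have "finite {(i, j). i \<in> A \<and> j \<in> C \<and> j < i}"
    by (rule finite_subset[OF inv_set_sub]) (use assms in simp)
  moreover have "finite {(i, j). i \<in> B \<and> j \<in> C \<and> j < i}"
    by (rule finite_subset[OF inv_set_sub]) (use assms in simp)
  moreover have "{(i, j). i \<in> A \<and> j \<in> C \<and> j < i} \<inter> {(i, j). i \<in> B \<and> j \<in> C \<and> j < i} = {}"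
    using assms(4) by auto
  ultimately show ?thesis unfolding ninv_def by (simp add: card_Un_disjoint)
qed

lemma inv_union_r:
  assumes "finite A" "finite B" "finite C" "B \<inter> C = {}"
  shows "ninv A (B \<union> C) = ninv A B + ninv A C"
proof -
  have "{(i, j). i \<in> A \<and> j \<in> B \<union> C \<and> j < i} =
        {(i, j). i \<in> A \<and> j \<in> B \<and> j < i} \<union> {(i, j). i \<in> A \<and> j \<in> C \<and> j < i}" by auto
  moreover have "finite {(i, j). i \<in> A \<and> j \<in> B \<and> j < i}"
    by (rule finite_subset[OF inv_set_sub]) (use assms in simp)
  moreover have "finite {(i, j). i \<in> A \<and> j \<in> C \<and> j < i}"
    by (rule finite_subset[OF inv_set_sub]) (use assms in simp)
  moreover have "{(i, j). i \<in> A \<and> j \<in> B \<and> j < i} \<inter> {(i, j). i \<in> A \<and> j \<in> C \<and> j < i} = {}"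
    using assms(4) by auto
  ultimately show ?thesis unfolding ninv_def by (simp add: card_Un_disjoint)
qed

lemma inv_swap:
  assumes "finite A" "finite B" "A \<inter> B = {}"
  shows "ninv A B + ninv B A = card A * card B"
proof -
  let ?X = "{(i, j). i \<in> A \<and> j \<in> B \<and> j < i}"
  let ?Y = "{(i, j). i \<in> A \<and> j \<in> B \<and> i < j}"
  have fX: "finite ?X" by (rule finite_subset[OF inv_set_sub]) (use assms in simp)
  have fY: "finite ?Y" by (rule finite_subset[of _ "A \<times> B"]) (use assms in auto)
  have "A \<times> B = ?X \<union> ?Y" using assms(3) by (auto simp: linorder_neq_iff)
  moreover have "?X \<inter> ?Y = {}" by auto
  ultimately have "card (A \<times> B) = card ?X + card ?Y"
    using card_Un_disjoint[OF fX fY] by simp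
  then have "card A * card B = card ?X + card ?Y" by (simp add: card_cartesian_product)
  moreover have "card ?Y = ninv B A"
  proof -
    have "?Y = (\<lambda>(i, j). (j, i)) ` {(i, j). i \<in> B \<and> j \<in> A \<and> j < i}" by auto
    moreover have "inj_on (\<lambda>(i, j). (j, i)) {(i, j). i \<in> B \<and> j \<in> A \<and> j < i}"
      by (auto simp: inj_on_def)
    ultimately show ?thesis unfolding ninv_def by (simp add: card_image)
  qed
  ultimately show ?thesis unfolding ninv_def by simp
qed

lemma wsign_union_l:
  "finite A \<Longrightarrow> finite B \<Longrightarrow> finite C \<Longrightarrow> A \<inter> B = {} \<Longrightarrow> wsign (A \<union> B) C = wsign A C * wsign B C"
  by (simp add: wsign_inv inv_union_l power_add)

lemma wsign_union_r:
  "finite A \<Longrightarrow> finite B \<Longrightarrow> finite C \<Longrightarrow> B \<inter> C = {} \<Longrightarrow> wsign A (B \<union> C) = wsign A B * wsign A C"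
  by (simp add: wsign_inv inv_union_r power_add)

lemma wsign_sq: "wsign A B * wsign A B = 1"
  by (simp add: wsign_inv flip: power_add)

lemma wsign_nz: "wsign A B \<noteq> 0"
  by (simp add: wsign_inv)

lemma wsign_swap:
  assumes "finite A" "finite B" "A \<inter> B = {}"
  shows "wsign A B = (-1) ^ (card A * card B) * wsign B A"
proof -
  have "wsign A B * wsign B A = (-1) ^ (card A * card B)"
    using inv_swap[OF assms] by (simp add: wsign_inv flip: power_add)
  then have "wsign A B * wsign B A * wsign B A = (-1) ^ (card A * card B) * wsign B A" by simp
  then show ?thesis by (simp add: mult.assoc wsign_sq)
qed

lemma wedge_add_l: "wedge (\<lambda>S. f S + g S) h K = wedge f h K + wedge g h K"
  unfolding wedge_def by (simp add: algebra_simps sum.distrib)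
lemma wedge_add_r: "wedge h (\<lambda>S. f S + g S) K = wedge h f K + wedge h g K"
  unfolding wedge_def by (simp add: algebra_simps sum.distrib)
lemma wedge_scale_l: "wedge (\<lambda>S. c * f S) h K = c * wedge f h K"
  unfolding wedge_def by (simp add: sum_distrib_left algebra_simps)
lemma wedge_scale_r: "wedge h (\<lambda>S. c * f S) K = c * wedge h f K"
  unfolding wedge_def by (simp add: sum_distrib_left algebra_simps)
lemma wedge_zero_l: "wedge zero_form h = zero_form"
  unfolding wedge_def zero_form_def by simp
lemma wedge_zero_r: "wedge h zero_form = zero_form"
  unfolding wedge_def zero_form_def by simp
lemma wedge_sum_l: "wedge (\<lambda>S. \<Sum>i\<in>I. c i * F i S) h K = (\<Sum>i\<in>I. c i * wedge (F i) h K)"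
  unfolding wedge_def by (simp add: sum_distrib_left sum_distrib_right sum.swap[of _ I] algebra_simps)
lemma wedge_sum_r: "wedge h (\<lambda>S. \<Sum>i\<in>I. c i * F i S) K = (\<Sum>i\<in>I. c i * wedge h (F i) K)"
  unfolding wedge_def by (simp add: sum_distrib_left sum_distrib_right sum.swap[of _ I] algebra_simps)

lemma wedge_infinite: "infinite K \<Longrightarrow> wedge f g K = 0"
  unfolding wedge_def by simp

definition eb :: "nat set \<Rightarrow> form" where
  "eb A = (\<lambda>S. if S = A then 1 else 0)"

lemma wedge_eb_l: "finite K \<Longrightarrow> wedge (eb A) g K = (if A \<subseteq> K then wsign A (K - A) * g (K - A) else 0)"
  unfolding wedge_def eb_def
  by (simp add: if_distrib if_distribR cong: if_cong) 


lemma wedge_assoc: "wedge (wedge f g) h = wedge f (wedge g h)"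
proof (rule ext)
  fix K
  show "wedge (wedge f g) h K = wedge f (wedge g h) K"
  proof (cases "finite K")
    case False then show ?thesis by (simp add: wedge_infinite)
  next
    case True
    have "wedge (wedge f g) h K =
      (\<Sum>J\<in>Pow K. \<Sum>I\<in>Pow J. wsign J (K - J) * wsign I (J - I) * f I * g (J - I) * h (K - J))"
      unfolding wedge_def by (simp add: sum_distrib_left sum_distrib_right algebra_simps)
    also have "\<dots> = (\<Sum>(J, I)\<in>Sigma (Pow K) Pow. wsign J (K - J) * wsign I (J - I) * f I * g (J - I) * h (K - J))"
      using True by (subst sum.Sigma) (auto intro: finite_subset)
    also have "\<dots> = (\<Sum>(I, J')\<in>Sigma (Pow K) (\<lambda>I. Pow (K - I)).
        wsign I (K - I) * f I * (wsign J' (K - I - J') * g J' * h (K - I - J')))"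
    proof (rule sum.reindex_bij_witness[where i = "\<lambda>(I, J'). (I \<union> J', I)" and j = "\<lambda>(J, I). (I, J - I)"])
      fix a assume "a \<in> Sigma (Pow K) Pow"
      then show "(case case a of (J, I) \<Rightarrow> (I, J - I) of (I, J') \<Rightarrow> (I \<union> J', I)) = a" by auto
    next
      fix a assume "a \<in> Sigma (Pow K) Pow"
      then show "(case a of (J, I) \<Rightarrow> (I, J - I)) \<in> Sigma (Pow K) (\<lambda>I. Pow (K - I))" by auto
    next
      fix b assume "b \<in> Sigma (Pow K) (\<lambda>I. Pow (K - I))"
      then show "(case case b of (I, J') \<Rightarrow> (I \<union> J', I) of (J, I) \<Rightarrow> (I, J - I)) = b" by auto
    next
      fix b assume "b \<in> Sigma (Pow K) (\<lambda>I. Pow (K - I))"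
      then show "(case b of (I, J') \<Rightarrow> (I \<union> J', I)) \<in> Sigma (Pow K) Pow" by auto
    next
      fix a assume a: "a \<in> Sigma (Pow K) Pow"
      obtain J I where aJI: "a = (J, I)" by (cases a)
      have IJ: "I \<subseteq> J" "J \<subseteq> K" using a aJI by auto
      have fin: "finite I" "finite J" "finite (J - I)" "finite (K - J)" "finite (K - I)"
        using IJ True by (auto intro: finite_subset)
      have e1: "K - I - (J - I) = K - J" using IJ by auto
      have e2: "wsign J (K - J) = wsign I (K - J) * wsign (J - I) (K - J)"
      proof -
        have "J = I \<union> (J - I)" using IJ by auto
        then have "wsign J (K - J) = wsign (I \<union> (J - I)) (K - J)" by simp
        also have "\<dots> = wsign I (K - J) * wsign (J - I) (K - J)"
          by (rule wsign_union_l) (use fin in auto)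
        finally show ?thesis .
      qed
      have e3: "wsign I (K - I) = wsign I (J - I) * wsign I (K - J)"
      proof -
        have "K - I = (J - I) \<union> (K - J)" using IJ by auto
        then have "wsign I (K - I) = wsign I ((J - I) \<union> (K - J))" by simp
        also have "\<dots> = wsign I (J - I) * wsign I (K - J)"
          by (rule wsign_union_r) (use fin in auto)
        finally show ?thesis .
      qed
      show "(case case a of (J, I) \<Rightarrow> (I, J - I) of
          (I, J') \<Rightarrow> wsign I (K - I) * f I * (wsign J' (K - I - J') * g J' * h (K - I - J'))) =
          (case a of (J, I) \<Rightarrow> wsign J (K - J) * wsign I (J - I) * f I * g (J - I) * h (K - J))"
        by (simp add: aJI e1 e2 e3 algebra_simps)
    qed
    also have "\<dots> = (\<Sum>I\<in>Pow K. \<Sum>J'\<in>Pow (K - I).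
        wsign I (K - I) * f I * (wsign J' (K - I - J') * g J' * h (K - I - J')))"
      using True by (subst sum.Sigma) (auto intro: finite_subset)
    also have "\<dots> = wedge f (wedge g h) K"
      unfolding wedge_def by (simp add: sum_distrib_left)
    finally show ?thesis .
  qed
qed

lemma wedge_comm:
  assumes f: "f \<in> Lam n p" and g: "g \<in> Lam n q"
  shows "wedge f g K = (-1) ^ (p * q) * wedge g f K"
proof (cases "finite K")
  case False then show ?thesis by (simp add: wedge_infinite)
next
  case True
  have "wedge f g K = (\<Sum>J\<in>Pow K. wsign (K - J) J * f (K - J) * g J)"
    unfolding wedge_def
  proof (rule sum.reindex_bij_witness[where i = "\<lambda>J. K - J" and j = "\<lambda>J. K - J"])
    fix a assume "a \<in> Pow K" then show "K - (K - a) = a" by auto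
  qed (auto simp: double_diff)
  also have "\<dots> = (\<Sum>J\<in>Pow K. (-1) ^ (p * q) * (wsign J (K - J) * g J * f (K - J)))"
  proof (rule sum.cong[OF refl])
    fix J assume J: "J \<in> Pow K"
    show "wsign (K - J) J * f (K - J) * g J = (-1) ^ (p * q) * (wsign J (K - J) * g J * f (K - J))"
    proof (cases "f (K - J) = 0 \<or> g J = 0")
      case True then show ?thesis by auto
    next
      case False
      then have c: "card (K - J) = p" "card J = q" using f g unfolding Lam_def by auto
      have "wsign (K - J) J = (-1) ^ (card (K - J) * card J) * wsign J (K - J)"
        by (rule wsign_swap) (use True J in \<open>auto intro: finite_subset\<close>)
      then show ?thesis by (simp add: c)
    qed
  qed
  also have "\<dots> = (-1) ^ (p * q) * wedge g f K"
    unfolding wedge_def by (simp add: sum_distrib_left)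
  finally show ?thesis .
qed

lemma wedge_Lam:
  assumes f: "f \<in> Lam n p" and g: "g \<in> Lam n q"
  shows "wedge f g \<in> Lam n (p + q)"
  unfolding Lam_def
proof (intro CollectI allI impI)
  fix S assume nz: "wedge f g S \<noteq> 0"
  then have fS: "finite S" using wedge_infinite by blast
  from nz obtain I where I: "I \<in> Pow S" and t: "wsign I (S - I) * f I * g (S - I) \<noteq> 0"
    unfolding wedge_def by (meson sum.not_neutral_contains_not_neutral)
  then have "f I \<noteq> 0" "g (S - I) \<noteq> 0" by auto
  then have A: "I \<subseteq> {..<n}" "card I = p" "S - I \<subseteq> {..<n}" "card (S - I) = q"
    using f g unfolding Lam_def by auto
  have "S = I \<union> (S - I)" using I by auto
  then have "S \<subseteq> {..<n}" using A by blast
  moreover have "card S = p + q"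
    using A I fS by (metis PowD card_Diff_subset card_mono finite_subset le_add_diff_inverse)
  ultimately show "S \<subseteq> {..<n} \<and> card S = p + q" by blast
qed

lemma Lam_add: assumes A: "f \<in> Lam n k" and B: "g \<in> Lam n k" shows "(\<lambda>S. f S + g S) \<in> Lam n k"
  unfolding Lam_def
proof (intro CollectI allI impI)
  fix S assume "f S + g S \<noteq> 0"
  then have "f S \<noteq> 0 \<or> g S \<noteq> 0" by auto
  then show "S \<subseteq> {..<n} \<and> card S = k" using A B unfolding Lam_def by auto
qed
lemma Lam_scale: "f \<in> Lam n k \<Longrightarrow> (\<lambda>S. c * f S) \<in> Lam n k"
  unfolding Lam_def by auto
lemma Lam_zero: "zero_form \<in> Lam n k"
  unfolding Lam_def zero_form_def by auto
lemma Lam_sum: assumes A: "\<And>i. i \<in> I \<Longrightarrow> F i \<in> Lam n k" shows "(\<lambda>S. \<Sum>i\<in>I. c i * F i S) \<in> Lam n k"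
  unfolding Lam_def
proof (intro CollectI allI impI)
  fix S assume "(\<Sum>i\<in>I. c i * F i S) \<noteq> 0"
  then obtain i where "i \<in> I" "c i * F i S \<noteq> 0" by (meson sum.not_neutral_contains_not_neutral)
  then have "F i S \<noteq> 0" "F i \<in> Lam n k" using A by auto
  then show "S \<subseteq> {..<n} \<and> card S = k" unfolding Lam_def by auto
qed
lemma Lam_eb: "A \<subseteq> {..<n} \<Longrightarrow> eb A \<in> Lam n (card A)"
  unfolding Lam_def eb_def by auto

lemma Lam_test:
  assumes mu: "\<mu> \<in> Lam n m"
    and T: "\<And>C. C \<subseteq> {..<n} \<Longrightarrow> card C = n - m \<Longrightarrow> wedge (eb C) \<mu> {..<n} = 0"
  shows "\<mu> = zero_form"
proof (rule ext)
  fix S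
  show "\<mu> S = zero_form S"
  proof (rule ccontr)
    assume "\<mu> S \<noteq> zero_form S"
    then have nz: "\<mu> S \<noteq> 0" by (simp add: zero_form_def)
    then have S: "S \<subseteq> {..<n}" "card S = m" using mu unfolding Lam_def by auto
    define C where "C = {..<n} - S"
    have "card C = n - m" unfolding C_def using S by (simp add: card_Diff_subset finite_subset[OF S(1)])
    moreover have "C \<subseteq> {..<n}" unfolding C_def by auto
    ultimately have "wedge (eb C) \<mu> {..<n} = 0" using T by blast
    moreover have "{..<n} - C = S" unfolding C_def using S by auto
    ultimately have "wsign C S * \<mu> S = 0"
      using wedge_eb_l[of "{..<n}" C \<mu>] \<open>C \<subseteq> {..<n}\<close> by simp
    then show False using nz wsign_nz by simp
  qed
qed




lemma zero_form_eq: "(\<lambda>S. 0) = zero_form" by (simp add: zero_form_def)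

lemma lin_on_zero: "lin_on (Lam n k) L \<Longrightarrow> L zero_form = 0"
proof -
  assume l: "lin_on (Lam n k) L"
  have "L (\<lambda>S. 0 * zero_form S) = 0 *\<^sub>R L zero_form" using l Lam_zero unfolding lin_on_def by blast
  then show ?thesis by (simp add: zero_form_eq)
qed

lemma lin_on_add: "lin_on (Lam n k) L \<Longrightarrow> f \<in> Lam n k \<Longrightarrow> g \<in> Lam n k \<Longrightarrow> L (\<lambda>S. f S + g S) = L f + L g"
  unfolding lin_on_def by blast
lemma lin_on_scale: "lin_on (Lam n k) L \<Longrightarrow> f \<in> Lam n k \<Longrightarrow> L (\<lambda>S. c * f S) = c *\<^sub>R L f"
  unfolding lin_on_def by blast

lemma lin_on_diff:
  assumes l: "lin_on (Lam n k) L" and f: "f \<in> Lam n k" and g: "g \<in> Lam n k"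
  shows "L (\<lambda>S. f S - g S) = L f - L g"
proof -
  have "L (\<lambda>S. f S + (-1) * g S) = L f + L (\<lambda>S. (-1) * g S)"
    by (rule lin_on_add[OF l f Lam_scale[OF g]])
  also have "L (\<lambda>S. (-1) * g S) = - L g" using lin_on_scale[OF l g, of "-1"] by simp
  finally show ?thesis by simp
qed

lemma lin_on_sum:
  assumes l: "lin_on (Lam n k) L" and fin: "finite I" and F: "\<And>i. i \<in> I \<Longrightarrow> F i \<in> Lam n k"
  shows "L (\<lambda>S. \<Sum>i\<in>I. c i * F i S) = (\<Sum>i\<in>I. c i *\<^sub>R L (F i))"
  using fin F
proof (induct I rule: finite_induct)
  case empty then show ?case using lin_on_zero[OF l] by (simp add: zero_form_eq)
next
  case (insert a I)
  have "L (\<lambda>S. \<Sum>i\<in>insert a I. c i * F i S) = L (\<lambda>S. c a * F a S + (\<Sum>i\<in>I. c i * F i S))"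
    using insert by simp
  also have "\<dots> = L (\<lambda>S. c a * F a S) + L (\<lambda>S. \<Sum>i\<in>I. c i * F i S)"
    by (rule lin_on_add[OF l]) (use insert in \<open>auto intro!: Lam_scale Lam_sum\<close>)
  also have "\<dots> = c a *\<^sub>R L (F a) + (\<Sum>i\<in>I. c i *\<^sub>R L (F i))"
    using insert lin_on_scale[OF l] by simp
  finally show ?case using insert by simp
qed

lemma section_ex:
  fixes L :: "form \<Rightarrow> 'v::euclidean_space"
  assumes l: "lin_on (Lam n k) L" and s: "L ` Lam n k = UNIV"
  shows "\<exists>sc. (\<forall>x. sc x \<in> Lam n k) \<and> (\<forall>x. L (sc x) = x) \<and>
     (\<forall>x y. sc (x + y) = (\<lambda>S. sc x S + sc y S)) \<and> (\<forall>c x. sc (c *\<^sub>R x) = (\<lambda>S. c * sc x S))"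
proof -
  have "\<forall>b. \<exists>\<theta>. \<theta> \<in> Lam n k \<and> L \<theta> = b" using s by (metis UNIV_I imageE)
  then obtain th where th: "\<And>b. th b \<in> Lam n k" "\<And>b. L (th b) = b" by metis
  define sc where "sc x = (\<lambda>S. \<Sum>b\<in>Basis. (x \<bullet> b) * th b S)" for x
  have "\<forall>x. sc x \<in> Lam n k" unfolding sc_def by (auto intro!: Lam_sum th)
  moreover have "\<forall>x. L (sc x) = x"
    unfolding sc_def by (simp add: lin_on_sum[OF l] th euclidean_representation)
  moreover have "\<forall>x y. sc (x + y) = (\<lambda>S. sc x S + sc y S)"
    unfolding sc_def by (simp add: inner_add_left algebra_simps sum.distrib)
  moreover have "\<forall>c x. sc (c *\<^sub>R x) = (\<lambda>S. c * sc x S)"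
    unfolding sc_def by (simp add: sum_distrib_left algebra_simps)
  ultimately show ?thesis by blast
qed

definition P_n :: "nat \<Rightarrow> nat \<Rightarrow> nat set set" where
  "P_n n k = {D. D \<subseteq> {..<n} \<and> card D = k}"

lemma finite_P_n: "finite (P_n n k)"
  unfolding P_n_def by (rule finite_subset[of _ "Pow {..<n}"]) auto

lemma expand:
  assumes f: "f \<in> Lam n k"
  shows "f = (\<lambda>S. \<Sum>D\<in>P_n n k. f D * eb D S)"
proof (rule ext)
  fix S
  have "(\<Sum>D\<in>P_n n k. f D * eb D S) = (\<Sum>D\<in>P_n n k. if D = S then f S else 0)"
    by (rule sum.cong) (auto simp: eb_def)
  also have "\<dots> = (if S \<in> P_n n k then f S else 0)" by (simp add: sum.delta finite_P_n)
  also have "\<dots> = f S" using f unfolding Lam_def P_n_def by auto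
  finally show "f S = (\<Sum>D\<in>P_n n k. f D * eb D S)" by simp
qed

lemma eb_Lam: "D \<in> P_n n k \<Longrightarrow> eb D \<in> Lam n k"
  unfolding P_n_def using Lam_eb by auto

lemma three_elems:
  assumes "finite A" "card A \<ge> 3"
  shows "\<exists>a b c. a \<in> A \<and> b \<in> A \<and> c \<in> A \<and> a \<noteq> b \<and> a \<noteq> c \<and> b \<noteq> c"
proof -
  obtain a where a: "a \<in> A" using assms by fastforce
  have "card (A - {a}) \<ge> 2" using assms a by simp
  then have "A - {a} \<noteq> {}" by (metis card.empty not_numeral_le_zero)
  then obtain b where b: "b \<in> A - {a}" by blast
  have "card (A - {a} - {b}) \<ge> 1" using assms a b by (simp add: card_Diff_subset)
  then have "A - {a} - {b} \<noteq> {}" by (metis card.empty not_one_le_zero)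
  then obtain c where c: "c \<in> A - {a} - {b}" by blast
  show ?thesis using a b c by blast
qed


lemma wedge_add_l_fun: "wedge (\<lambda>S. f S + g S) h = (\<lambda>K. wedge f h K + wedge g h K)"
  by (rule ext) (rule wedge_add_l)
lemma wedge_add_r_fun: "wedge h (\<lambda>S. f S + g S) = (\<lambda>K. wedge h f K + wedge h g K)"
  by (rule ext) (rule wedge_add_r)
lemma wedge_scale_l_fun: "wedge (\<lambda>S. c * f S) h = (\<lambda>K. c * wedge f h K)"
  by (rule ext) (rule wedge_scale_l)
lemma wedge_scale_r_fun: "wedge h (\<lambda>S. c * f S) = (\<lambda>K. c * wedge h f K)"
  by (rule ext) (rule wedge_scale_r)

lemma wedge_Lam11: "f \<in> Lam n 1 \<Longrightarrow> g \<in> Lam n 1 \<Longrightarrow> wedge f g \<in> Lam n 2"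
  using wedge_Lam[of f n 1 g 1] by (simp add: numeral_2_eq_2)

lemma wedge_self1: "\<theta> \<in> Lam n 1 \<Longrightarrow> wedge \<theta> \<theta> = zero_form"
proof (rule ext)
  fix K assume t: "\<theta> \<in> Lam n 1"
  have "wedge \<theta> \<theta> K = (-1) ^ (1 * 1) * wedge \<theta> \<theta> K" by (rule wedge_comm[OF t t])
  then show "wedge \<theta> \<theta> K = zero_form K" by (simp add: zero_form_def)
qed

lemma nonzero_form: "\<eta> \<noteq> zero_form \<Longrightarrow> \<exists>S. \<eta> S \<noteq> 0"
  by (auto simp: zero_form_def fun_eq_iff)

lemma wedge_comm_12: "f \<in> Lam n 1 \<Longrightarrow> g \<in> Lam n 2 \<Longrightarrow> wedge f g = wedge g f"
  by (rule ext) (simp add: wedge_comm[of f n 1 g 2])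

lemma wedge_comm_11: "f \<in> Lam n 1 \<Longrightarrow> g \<in> Lam n 1 \<Longrightarrow> wedge f g = (\<lambda>K. (-1) * wedge g f K)"
  by (rule ext) (simp add: wedge_comm[of f n 1 g 1])

context c2
begin

lemma morph_facts:
  assumes "surj_carnot_morph_free n br pi1 pi2"
  shows "lin_on (Lam n 1) pi1" "lin_on (Lam n 2) pi2"
    "\<And>\<theta> \<theta>'. \<theta> \<in> Lam n 1 \<Longrightarrow> \<theta>' \<in> Lam n 1 \<Longrightarrow> pi2 (wedge \<theta> \<theta>') = br (pi1 \<theta>) (pi1 \<theta>')"
    "pi1 ` Lam n 1 = UNIV" "pi2 ` Lam n 2 = UNIV"
  using assms unfolding surj_carnot_morph_free_def carnot_morph_free_def by auto

lemma ker_facts: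
  assumes sm: "surj_carnot_morph_free n br pi1 pi2" and eta: "\<eta> \<in> LamPi n k pi1 pi2"
  shows "\<And>\<theta>. \<theta> \<in> Lam n 1 \<Longrightarrow> pi1 \<theta> = 0 \<Longrightarrow> wedge \<theta> \<eta> = zero_form"
    and "\<And>\<omega>. \<omega> \<in> Lam n 2 \<Longrightarrow> pi2 \<omega> = 0 \<Longrightarrow> wedge \<omega> \<eta> = zero_form"
proof -
  note mf = morph_facts[OF sm]
  have K: "ker_morph n pi1 pi2 \<subseteq> Anh12 n \<eta>" using eta unfolding LamPi_def by auto
  fix \<theta> assume "\<theta> \<in> Lam n 1" "pi1 \<theta> = 0"
  then have "(\<theta>, zero_form) \<in> ker_morph n pi1 pi2"
    unfolding ker_morph_def using Lam_zero lin_on_zero[OF mf(2)] by auto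
  then show "wedge \<theta> \<eta> = zero_form" using K unfolding Anh12_def by auto
next
  note mf = morph_facts[OF sm]
  have K: "ker_morph n pi1 pi2 \<subseteq> Anh12 n \<eta>" using eta unfolding LamPi_def by auto
  fix \<omega> assume "\<omega> \<in> Lam n 2" "pi2 \<omega> = 0"
  then have "(zero_form, \<omega>) \<in> ker_morph n pi1 pi2"
    unfolding ker_morph_def using Lam_zero lin_on_zero[OF mf(1)] by auto
  then show "wedge \<omega> \<eta> = zero_form" using K unfolding Anh12_def by auto
qed

lemma wedge_replace:
  assumes l: "lin_on (Lam n k) L" and f: "f \<in> Lam n k" and g: "g \<in> Lam n k" and e: "L f = L g"
    and K: "\<And>\<omega>. \<omega> \<in> Lam n k \<Longrightarrow> L \<omega> = 0 \<Longrightarrow> wedge \<omega> \<eta> = zero_form"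
  shows "wedge f \<eta> = wedge g \<eta>"
proof -
  define d where "d S = f S - g S" for S
  have dL: "d \<in> Lam n k" unfolding d_def using Lam_add[OF f Lam_scale[OF g, of "-1"]] by simp
  have "L d = 0" unfolding d_def using lin_on_diff[OF l f g] e by simp
  then have wd: "wedge d \<eta> = zero_form" using K dL by blast
  have "f = (\<lambda>S. d S + g S)" unfolding d_def by auto
  then have "wedge f \<eta> = (\<lambda>K. wedge d \<eta> K + wedge g \<eta> K)" by (simp add: wedge_add_l_fun)
  then show ?thesis using wd by (simp add: zero_form_def)
qed

lemma E2:
  assumes sm: "surj_carnot_morph_free n br pi1 pi2" and k3: "k + 3 \<le> n"
    and eta: "\<eta> \<in> LamPi n k pi1 pi2" and nz: "\<eta> \<noteq> zero_form"
  shows "\<exists>\<Phi>::'a \<Rightarrow> 'b \<Rightarrow> real. bilinear \<Phi> \<and> (\<forall>x y. \<Phi> y (br x y) = 0) \<and> (\<exists>x z. \<Phi> x z \<noteq> 0)"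
proof -
  note mf = morph_facts[OF sm]
  note kf = ker_facts[OF sm eta]
  have etaL: "\<eta> \<in> Lam n k" using eta unfolding LamPi_def by auto
  obtain s1 where s1: "\<And>x. s1 x \<in> Lam n 1" "\<And>x. pi1 (s1 x) = x"
    "\<And>x y. s1 (x + y) = (\<lambda>S. s1 x S + s1 y S)" "\<And>c x. s1 (c *\<^sub>R x) = (\<lambda>S. c * s1 x S)"
    using section_ex[OF mf(1) mf(4)] by blast
  obtain s2 where s2: "\<And>x. s2 x \<in> Lam n 2" "\<And>x. pi2 (s2 x) = x"
    "\<And>x y. s2 (x + y) = (\<lambda>S. s2 x S + s2 y S)" "\<And>c x. s2 (c *\<^sub>R x) = (\<lambda>S. c * s2 x S)"
    using section_ex[OF mf(2) mf(5)] by blast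
  obtain I0 where I0: "\<eta> I0 \<noteq> 0" using nonzero_form[OF nz] by blast
  then have I0s: "I0 \<subseteq> {..<n}" "card I0 = k" using etaL unfolding Lam_def by auto
  have fI0: "finite I0" using I0s(1) finite_subset by blast
  have "card ({..<n} - I0) \<ge> 3" using I0s k3 fI0 by (simp add: card_Diff_subset)
  then obtain a b c where abc: "a \<in> {..<n} - I0" "b \<in> {..<n} - I0" "c \<in> {..<n} - I0"
    "a \<noteq> b" "a \<noteq> c" "b \<noteq> c"
    using three_elems[of "{..<n} - I0"] by blast
  define K0 where "K0 = insert a (insert b (insert c I0))"
  define \<Phi> where "\<Phi> x z = wedge (s1 x) (wedge (s2 z) \<eta>) K0" for x z
  have bil: "bilinear \<Phi>"
    by (rule bilinearI) (simp_all add: \<Phi>_def s1 s2 wedge_add_l_fun wedge_add_r_fun wedge_scale_l_fun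
        wedge_scale_r_fun wedge_add_l wedge_add_r wedge_scale_l wedge_scale_r)
  have cond: "\<Phi> y (br x y) = 0" for x y
  proof -
    define w where "w = wedge (s1 x) (s1 y)"
    have wL: "w \<in> Lam n 2" unfolding w_def using wedge_Lam11[OF s1(1) s1(1)] .
    have pw: "pi2 w = br x y" unfolding w_def using mf(3)[OF s1(1) s1(1)] s1(2) by simp
    have e1: "wedge (s2 (br x y)) \<eta> = wedge w \<eta>"
      by (rule wedge_replace[OF mf(2) s2(1) wL]) (use pw s2(2) kf(2) in auto)
    have "wedge (s1 y) w = wedge (s1 y) (\<lambda>K. (-1) * wedge (s1 y) (s1 x) K)"
      unfolding w_def using wedge_comm_11[OF s1(1) s1(1)] by metis
    also have "\<dots> = (\<lambda>K. (-1) * wedge (s1 y) (wedge (s1 y) (s1 x)) K)" by (rule wedge_scale_r_fun)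
    also have "wedge (s1 y) (wedge (s1 y) (s1 x)) = zero_form"
      by (simp add: wedge_assoc[symmetric] wedge_self1[OF s1(1)] wedge_zero_l)
    finally have "wedge (s1 y) w = zero_form" by (simp add: zero_form_def)
    then show ?thesis
      by (simp add: \<Phi>_def e1 wedge_assoc[symmetric] wedge_zero_l) (simp add: zero_form_def)
  qed
  define x0 where "x0 = pi1 (eb {a})"
  define z0 where "z0 = pi2 (eb {b, c})"
  have eaL: "eb {a} \<in> Lam n 1" using Lam_eb[of "{a}" n] abc by simp
  have ebcL: "eb {b, c} \<in> Lam n 2" using Lam_eb[of "{b, c}" n] abc by (simp add: numeral_2_eq_2)
  have e2: "wedge (s2 z0) \<eta> = wedge (eb {b, c}) \<eta>"
    by (rule wedge_replace[OF mf(2) s2(1) ebcL]) (use s2(2) kf(2) z0_def in auto)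
  define G where "G = wedge (eb {b, c}) \<eta>"
  define \<kappa> where "\<kappa> S = s1 x0 S - eb {a} S" for S
  have kL: "\<kappa> \<in> Lam n 1" unfolding \<kappa>_def using Lam_add[OF s1(1) Lam_scale[OF eaL, of "-1"]] by simp
  have "pi1 \<kappa> = 0" unfolding \<kappa>_def using lin_on_diff[OF mf(1) s1(1) eaL] s1(2) x0_def by simp
  then have wk: "wedge \<kappa> \<eta> = zero_form" using kf(1) kL by blast
  have "wedge \<kappa> G = wedge (wedge \<kappa> (eb {b, c})) \<eta>" unfolding G_def by (simp add: wedge_assoc)
  also have "\<dots> = wedge (wedge (eb {b, c}) \<kappa>) \<eta>" using wedge_comm_12[OF kL ebcL] by simp
  also have "\<dots> = zero_form" by (simp add: wedge_assoc wk wedge_zero_r)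
  finally have wkG: "wedge \<kappa> G = zero_form" .
  have "s1 x0 = (\<lambda>S. eb {a} S + \<kappa> S)" unfolding \<kappa>_def by auto
  then have "\<Phi> x0 z0 = wedge (eb {a}) G K0 + wedge \<kappa> G K0"
    unfolding \<Phi>_def by (simp add: e2 G_def wedge_add_l)
  also have "wedge \<kappa> G K0 = 0" using wkG by (simp add: zero_form_def)
  also have fK0: "finite K0" unfolding K0_def using fI0 by simp
  have "wedge (eb {a}) G K0 = wsign {a} (K0 - {a}) * G (K0 - {a})"
    using wedge_eb_l[OF fK0] unfolding K0_def by simp
  also have "G (K0 - {a}) = wsign {b, c} (K0 - {a} - {b, c}) * \<eta> (K0 - {a} - {b, c})"
    unfolding G_def using wedge_eb_l[of "K0 - {a}" "{b,c}" \<eta>] fK0 abc unfolding K0_def by auto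
  also have "K0 - {a} - {b, c} = I0" unfolding K0_def using abc by auto
  finally have "\<Phi> x0 z0 = wsign {a} (K0 - {a}) * (wsign {b, c} I0 * \<eta> I0) + 0" .
  then have "\<Phi> x0 z0 \<noteq> 0" using I0 wsign_nz by simp
  then show ?thesis using bil cond by blast
qed


lemma wsign_single: "wsign {i} D = (-1) ^ card {d \<in> D. d < i}"
proof -
  have "{(a, b). a \<in> {i} \<and> b \<in> D \<and> b < a} = (\<lambda>d. (i, d)) ` {d \<in> D. d < i}" by auto
  moreover have "inj_on (\<lambda>d. (i, d)) {d \<in> D. d < i}" by (auto simp: inj_on_def)
  ultimately show ?thesis unfolding wsign_def by (simp add: card_image)
qed

lemma eb_pair: "j < k \<Longrightarrow> eb {j, k} = wedge (eb {j}) (eb {k})"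
proof (rule ext)
  fix K assume jk: "j < k"
  show "eb {j, k} K = wedge (eb {j}) (eb {k}) K"
  proof (cases "finite K")
    case False
    then have "K \<noteq> {j, k}" by auto
    then show ?thesis using False by (simp add: eb_def wedge_infinite)
  next
    case True
    have "{d \<in> {k}. d < j} = {}" using jk by auto
    then have cf: "card {d \<in> {k}. d < j} = 0" by (metis card.empty)
    have ws: "wsign {j} {k} = 1" unfolding wsign_single cf by simp
    have W: "wedge (eb {j}) (eb {k}) K = (if {j} \<subseteq> K then wsign {j} (K - {j}) * eb {k} (K - {j}) else 0)"
      by (rule wedge_eb_l[OF True])
    show ?thesis
    proof (cases "K = {j, k}")
      case True
      then have "{j} \<subseteq> K" "K - {j} = {k}" using jk by auto
      then show ?thesis using W ws True by (simp add: eb_def)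
    next
      case False
      have "wedge (eb {j}) (eb {k}) K = 0"
      proof (cases "j \<in> K")
        case True
        then have "K - {j} \<noteq> {k}" using False by auto
        then have "eb {k} (K - {j}) = 0" by (simp add: eb_def)
        then show ?thesis using W by simp
      next
        case False then show ?thesis using W by simp
      qed
      moreover have "eb {j, k} K = 0" using False by (simp add: eb_def)
      ultimately show ?thesis by simp
    qed
  qed
qed

lemma E3:
  assumes sm: "surj_carnot_morph_free n br pi1 pi2" and n3: "3 \<le> n"
    and Phi: "bilinear (\<Phi>::'a \<Rightarrow> 'b \<Rightarrow> real)" and c: "\<forall>x y. \<Phi> y (br x y) = 0"
    and nz: "\<Phi> x0 z0 \<noteq> 0"
  shows "\<exists>\<eta>. \<eta> \<in> LamPi n (n - 3) pi1 pi2 \<and> \<eta> \<noteq> zero_form"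
proof -
  note mf = morph_facts[OF sm]
  define U where "U = {..<n}"
  have fU: "finite U" unfolding U_def by simp
  define xs where "xs i = pi1 (eb {i})" for i
  have polar: "\<Phi> u (br w v) + \<Phi> v (br w u) = 0" for u v w
  proof -
    have "\<Phi> (u + v) (br w (u + v)) = 0" using c by blast
    then have "\<Phi> u (br w u) + \<Phi> u (br w v) + \<Phi> v (br w u) + \<Phi> v (br w v) = 0"
      by (simp add: br_add_r bilinear_ladd[OF Phi] bilinear_radd[OF Phi] algebra_simps)
    moreover have "\<Phi> u (br w u) = 0" "\<Phi> v (br w v) = 0" using c by auto
    ultimately show ?thesis by simp
  qed
  have selfz: "\<Phi> u (br u v) = 0" for u v
    using c skew[of u v] bilinear_rneg[OF Phi] by (metis neg_equal_0_iff_equal)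
  have pe: "pi2 (eb {j, k}) = br (xs j) (xs k)" if "j < k" "k < n" for j k
  proof -
    have "eb {j} \<in> Lam n 1" "eb {k} \<in> Lam n 1" using Lam_eb[of "{j}" n] Lam_eb[of "{k}" n] that by auto
    then show ?thesis using mf(3) eb_pair[OF that(1)] unfolding xs_def by simp
  qed
  define t where "t C = \<Phi> (xs (Min C)) (br (xs (Min (C - {Min C}))) (xs (Max C)))" for C
  have CI: "wsign {i} D * t (insert i D) = \<Phi> (xs i) (pi2 (eb D))"
    if i: "i < n" and D: "D \<in> P_n n 2" and iD: "i \<notin> D" for i D
  proof -
    obtain j k where jk: "D = {j, k}" "j < k"
    proof -
      obtain x y where "D = {x, y}" "x \<noteq> y" using D unfolding P_n_def by (auto simp: card_2_iff)
      then show ?thesis using that by (metis insert_commute linorder_neq_iff)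
    qed
    have kn: "k < n" using D jk unfolding P_n_def by auto
    have pD: "pi2 (eb D) = br (xs j) (xs k)" using pe[OF jk(2) kn] jk by simp
    have ij: "i \<noteq> j" "i \<noteq> k" using iD jk by auto
    consider "i < j" | "j < i \<and> i < k" | "k < i" using ij jk(2) by linarith
    then show ?thesis
    proof cases
      case 1
      have "{d \<in> D. d < i} = {}" using 1 jk by auto
      then have cf: "card {d \<in> D. d < i} = 0" by (metis card.empty)
      have ws: "wsign {i} D = 1" unfolding wsign_single cf by simp
      have "t (insert i D) = \<Phi> (xs i) (br (xs j) (xs k))"
      proof -
        have "Min (insert i D) = i" "Max (insert i D) = k" "insert i D - {i} = {j, k}" "Min {j, k} = j"
          using 1 jk by auto
        then show ?thesis unfolding t_def by simp
      qed
      then show ?thesis by (simp add: ws pD)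
    next
      case 2
      have "{d \<in> D. d < i} = {j}" using 2 jk by auto
      then have cf: "card {d \<in> D. d < i} = 1" by simp
      have ws: "wsign {i} D = -1" unfolding wsign_single cf by simp
      have "t (insert i D) = \<Phi> (xs j) (br (xs i) (xs k))"
      proof -
        have "Min (insert i D) = j" "Max (insert i D) = k" "insert i D - {j} = {i, k}" "Min {i, k} = i"
          using 2 jk by auto
        then show ?thesis unfolding t_def by simp
      qed
      moreover have "\<Phi> (xs i) (br (xs k) (xs j)) + \<Phi> (xs j) (br (xs k) (xs i)) = 0" by (rule polar)
      ultimately show ?thesis
        by (simp add: ws pD skew[of "xs k"] bilinear_rneg[OF Phi])
    next
      case 3
      have "{d \<in> D. d < i} = {j, k}" using 3 jk by auto
      moreover have "card {j, k} = 2" using jk by auto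
      ultimately have cf: "card {d \<in> D. d < i} = 2" by simp
      have ws: "wsign {i} D = 1" unfolding wsign_single cf by simp
      have "t (insert i D) = \<Phi> (xs j) (br (xs k) (xs i))"
      proof -
        have "Min (insert i D) = j" "Max (insert i D) = i" "insert i D - {j} = {i, k}" "Min {i, k} = k"
          using 3 jk by auto
        then show ?thesis unfolding t_def by simp
      qed
      moreover have "\<Phi> (xs i) (br (xs k) (xs j)) + \<Phi> (xs j) (br (xs k) (xs i)) = 0" by (rule polar)
      ultimately show ?thesis
        by (simp add: ws pD skew[of "xs k" "xs j"] bilinear_rneg[OF Phi])
    qed
  qed
  define \<eta> where "\<eta> J = (if J \<subseteq> U \<and> card J = n - 3 then wsign (U - J) J * t (U - J) else 0)" for J
  have etaL: "\<eta> \<in> Lam n (n - 3)" unfolding Lam_def \<eta>_def U_def by auto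
  have PB: "wedge (eb {i}) (wedge (eb D) \<eta>) U = \<Phi> (xs i) (pi2 (eb D))"
    if i: "i < n" and D: "D \<in> P_n n 2" for i D
  proof -
    have DU: "D \<subseteq> U" "card D = 2" using D unfolding P_n_def U_def by auto
    have fD: "finite D" using DU fU finite_subset by blast
    have iU: "{i} \<subseteq> U" using i unfolding U_def by auto
    have L1: "wedge (eb {i}) (wedge (eb D) \<eta>) U = wsign {i} (U - {i}) * wedge (eb D) \<eta> (U - {i})"
      using wedge_eb_l[OF fU, of "{i}"] iU by simp
    show ?thesis
    proof (cases "i \<in> D")
      case True
      then have "\<not> D \<subseteq> U - {i}" by auto
      then have "wedge (eb D) \<eta> (U - {i}) = 0" using wedge_eb_l[of "U - {i}" D \<eta>] fU by simp
      moreover have "\<Phi> (xs i) (pi2 (eb D)) = 0"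
      proof -
        obtain j k where jk: "D = {j, k}" "j < k"
        proof -
          obtain x y where "D = {x, y}" "x \<noteq> y" using DU by (auto simp: card_2_iff)
          then show ?thesis using that by (metis insert_commute linorder_neq_iff)
        qed
        have "k < n" using DU jk unfolding U_def by auto
        then have "pi2 (eb D) = br (xs j) (xs k)" using pe jk by simp
        moreover have "i = j \<or> i = k" using True jk by auto
        ultimately show ?thesis using selfz c by auto
      qed
      ultimately show ?thesis using L1 by simp
    next
      case False
      define C where "C = insert i D"
      define R where "R = U - C"
      have DUi: "D \<subseteq> U - {i}" using DU False by auto
      have e1: "U - {i} - D = R" unfolding R_def C_def by auto
      have L2: "wedge (eb D) \<eta> (U - {i}) = wsign D R * \<eta> R"
        using wedge_eb_l[of "U - {i}" D \<eta>] fU DUi e1 by simp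
      have CU: "C \<subseteq> U" "card C = 3" unfolding C_def using DU iU False fD by auto
      have fC: "finite C" using CU fU finite_subset by blast
      have RU: "R \<subseteq> U" "card R = n - 3" unfolding R_def using CU fU fC
        by (auto simp: card_Diff_subset U_def)
      have UR: "U - R = C" unfolding R_def using CU by auto
      have etaR: "\<eta> R = wsign C R * t C" unfolding \<eta>_def using RU UR by simp
      have fR: "finite R" using RU fU finite_subset by blast
      have s1: "wsign {i} (U - {i}) = wsign {i} D * wsign {i} R"
      proof -
        have "U - {i} = D \<union> R" using DUi e1 by auto
        moreover have "D \<inter> R = {}" unfolding R_def C_def by auto
        ultimately show ?thesis using wsign_union_r[of "{i}" D R] fD fR by simp
      qed
      have s2: "wsign C R = wsign {i} R * wsign D R"
      proof -
        have "C = {i} \<union> D" unfolding C_def by auto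
        moreover have "{i} \<inter> D = {}" using False by auto
        ultimately show ?thesis using wsign_union_l[of "{i}" D R] fD fR by simp
      qed
      have "wedge (eb {i}) (wedge (eb D) \<eta>) U
          = wsign {i} D * t C * ((wsign {i} R * wsign {i} R) * (wsign D R * wsign D R))"
        using L1 L2 etaR s1 s2 by (simp add: algebra_simps)
      also have "\<dots> = wsign {i} D * t C" by (simp add: wsign_sq)
      also have "\<dots> = \<Phi> (xs i) (pi2 (eb D))" unfolding C_def by (rule CI[OF i D False])
      finally show ?thesis .
    qed
  qed
  have pairing: "wedge \<theta> (wedge \<omega> \<eta>) U = \<Phi> (pi1 \<theta>) (pi2 \<omega>)"
    if th: "\<theta> \<in> Lam n 1" and om: "\<omega> \<in> Lam n 2" for \<theta> \<omega>
  proof -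
    have e\<theta>: "\<theta> = (\<lambda>S. \<Sum>A\<in>P_n n 1. \<theta> A * eb A S)" by (rule expand[OF th])
    have e\<omega>: "\<omega> = (\<lambda>S. \<Sum>D\<in>P_n n 2. \<omega> D * eb D S)" by (rule expand[OF om])
    have w1: "wedge \<omega> \<eta> = (\<lambda>K. \<Sum>D\<in>P_n n 2. \<omega> D * wedge (eb D) \<eta> K)"
      by (subst e\<omega>, rule ext, rule wedge_sum_l)
    have "wedge \<theta> (wedge \<omega> \<eta>) U = (\<Sum>A\<in>P_n n 1. \<theta> A * wedge (eb A) (wedge \<omega> \<eta>) U)"
      by (subst e\<theta>, rule wedge_sum_l)
    also have "\<dots> = (\<Sum>A\<in>P_n n 1. \<theta> A * (\<Sum>D\<in>P_n n 2. \<omega> D * wedge (eb A) (wedge (eb D) \<eta>) U))"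
      by (simp only: w1 wedge_sum_r)
    also have "\<dots> = (\<Sum>A\<in>P_n n 1. \<theta> A * (\<Sum>D\<in>P_n n 2. \<omega> D * \<Phi> (pi1 (eb A)) (pi2 (eb D))))"
    proof (intro sum.cong refl arg_cong2[where f="(*)"])
      fix A D assume A: "A \<in> P_n n 1" and D: "D \<in> P_n n 2"
      obtain i where Ai: "A = {i}" using A unfolding P_n_def by (auto simp: card_1_singleton_iff)
      have "i < n" using A Ai unfolding P_n_def by auto
      then show "wedge (eb A) (wedge (eb D) \<eta>) U = \<Phi> (pi1 (eb A)) (pi2 (eb D))"
        using PB[OF _ D] Ai unfolding xs_def by simp
    qed
    also have "\<dots> = \<Phi> (\<Sum>A\<in>P_n n 1. \<theta> A *\<^sub>R pi1 (eb A)) (\<Sum>D\<in>P_n n 2. \<omega> D *\<^sub>R pi2 (eb D))"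
      by (simp add: bilinear_sum[OF Phi] sum.cartesian_product[symmetric] bilinear_lmul[OF Phi]
          bilinear_rmul[OF Phi] sum_distrib_left algebra_simps)
    also have "\<dots> = \<Phi> (pi1 \<theta>) (pi2 \<omega>)"
    proof -
      have "pi1 \<theta> = (\<Sum>A\<in>P_n n 1. \<theta> A *\<^sub>R pi1 (eb A))"
        by (subst e\<theta>, rule lin_on_sum[OF mf(1) finite_P_n eb_Lam])
      moreover have "pi2 \<omega> = (\<Sum>D\<in>P_n n 2. \<omega> D *\<^sub>R pi2 (eb D))"
        by (subst e\<omega>, rule lin_on_sum[OF mf(2) finite_P_n eb_Lam])
      ultimately show ?thesis by simp
    qed
    finally show ?thesis .
  qed
  have inLamPi: "\<eta> \<in> LamPi n (n - 3) pi1 pi2"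
    unfolding LamPi_def
  proof (intro CollectI conjI subsetI etaL)
    fix p assume p: "p \<in> ker_morph n pi1 pi2"
    obtain \<theta> \<omega> where p\<theta>: "p = (\<theta>, \<omega>)" by (cases p)
    have th: "\<theta> \<in> Lam n 1" "pi1 \<theta> = 0" and om: "\<omega> \<in> Lam n 2" "pi2 \<omega> = 0"
      using p p\<theta> unfolding ker_morph_def by auto
    have w1: "wedge \<theta> \<eta> = zero_form"
    proof (rule Lam_test[where n=n and m="n - 2"])
      have e: "n - 2 = 1 + (n - 3)" using n3 by arith
      show "wedge \<theta> \<eta> \<in> Lam n (n - 2)" unfolding e by (rule wedge_Lam[OF th(1) etaL])
    next
      fix C assume C: "C \<subseteq> {..<n}" "card C = n - (n - 2)"
      then have CP: "C \<in> P_n n 2" unfolding P_n_def using n3 by auto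
      have ebC: "eb C \<in> Lam n 2" by (rule eb_Lam[OF CP])
      have "wedge (eb C) (wedge \<theta> \<eta>) = wedge \<theta> (wedge (eb C) \<eta>)"
        by (simp add: wedge_assoc[symmetric] wedge_comm_12[OF th(1) ebC])
      then show "wedge (eb C) (wedge \<theta> \<eta>) {..<n} = 0"
        using pairing[OF th(1) ebC] th(2) bilinear_lzero[OF Phi] unfolding U_def by simp
    qed
    have w2: "wedge \<omega> \<eta> = zero_form"
    proof (rule Lam_test[where n=n and m="n - 1"])
      have e: "n - 1 = 2 + (n - 3)" using n3 by arith
      show "wedge \<omega> \<eta> \<in> Lam n (n - 1)" unfolding e by (rule wedge_Lam[OF om(1) etaL])
    next
      fix C assume C: "C \<subseteq> {..<n}" "card C = n - (n - 1)"
      then have CP: "C \<in> P_n n 1" unfolding P_n_def using n3 by auto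
      have ebC: "eb C \<in> Lam n 1" by (rule eb_Lam[OF CP])
      show "wedge (eb C) (wedge \<omega> \<eta>) {..<n} = 0"
        using pairing[OF ebC om(1)] om(2) bilinear_rzero[OF Phi] unfolding U_def by simp
    qed
    show "p \<in> Anh12 n \<eta>" unfolding Anh12_def using p\<theta> th om w1 w2 by simp
  qed
  have "\<eta> \<noteq> zero_form"
  proof
    assume z: "\<eta> = zero_form"
    obtain \<theta>0 where t0: "\<theta>0 \<in> Lam n 1" "pi1 \<theta>0 = x0" using mf(4) by (metis UNIV_I imageE)
    obtain \<omega>0 where w0: "\<omega>0 \<in> Lam n 2" "pi2 \<omega>0 = z0" using mf(5) by (metis UNIV_I imageE)
    have "wedge \<theta>0 (wedge \<omega>0 \<eta>) U = 0" unfolding z wedge_zero_r by (simp add: zero_form_def)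
    then show False using pairing[OF t0(1) w0(1)] t0 w0 nz by simp
  qed
  then show ?thesis using inLamPi by blast
qed

end



context c2
begin

lemma E4: "\<exists>(pi1::form \<Rightarrow> 'a) (pi2::form \<Rightarrow> 'b). surj_carnot_morph_free DIM('a) br pi1 pi2"
proof -
  define r where "r = DIM('a)"
  obtain bs where bs: "bij_betw bs {..<r} (Basis::'a set)"
    using ex_bij_betw_nat_finite[of "Basis::'a set"] by (auto simp: r_def atLeast0LessThan)
  have bsr: "i < r \<Longrightarrow> bs i \<in> Basis" for i using bs by (auto simp: bij_betw_def)
  define pi1 where "pi1 \<theta> = (\<Sum>i<r. \<theta> {i} *\<^sub>R bs i)" for \<theta> :: form
  define pi2 where "pi2 \<omega> = (\<Sum>D\<in>P_n r 2. \<omega> D *\<^sub>R br (bs (Min D)) (bs (Max D)))" for \<omega> :: form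
  have p1sum: "pi1 (\<lambda>S. \<Sum>i\<in>I. c i * F i S) = (\<Sum>i\<in>I. c i *\<^sub>R pi1 (F i))" for I c F
    unfolding pi1_def by (simp add: scaleR_sum_left scaleR_sum_right sum.swap[of _ I])
  have p2sum: "pi2 (\<lambda>S. \<Sum>i\<in>I. c i * F i S) = (\<Sum>i\<in>I. c i *\<^sub>R pi2 (F i))" for I c F
    unfolding pi2_def by (simp add: scaleR_sum_left scaleR_sum_right sum.swap[of _ I])
  have p2scale: "pi2 (\<lambda>S. c * F S) = c *\<^sub>R pi2 F" for c F
    unfolding pi2_def by (simp add: scaleR_sum_right)
  have p2zero: "pi2 zero_form = 0" unfolding pi2_def zero_form_def by simp
  have l1: "lin_on (Lam r 1) pi1"
    unfolding lin_on_def pi1_def by (simp add: scaleR_add_left sum.distrib scaleR_sum_right)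
  have l2: "lin_on (Lam r 2) pi2"
    unfolding lin_on_def pi2_def by (simp add: scaleR_add_left sum.distrib scaleR_sum_right)
  have p1e: "pi1 (eb {i}) = bs i" if "i < r" for i
  proof -
    have "pi1 (eb {i}) = (\<Sum>l<r. (if l = i then bs l else 0))"
      unfolding pi1_def by (rule sum.cong) (auto simp: eb_def)
    also have "\<dots> = bs i" using that by (simp add: sum.delta)
    finally show ?thesis .
  qed
  have p2e: "pi2 (eb {j, k}) = br (bs j) (bs k)" if "j < k" "k < r" for j k
  proof -
    have "pi2 (eb {j, k}) = (\<Sum>D\<in>P_n r 2. (if D = {j, k} then br (bs (Min D)) (bs (Max D)) else 0))"
      unfolding pi2_def by (rule sum.cong) (auto simp: eb_def)
    also have "\<dots> = br (bs (Min {j, k})) (bs (Max {j, k}))"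
      using that by (simp add: sum.delta finite_P_n P_n_def)
    also have "\<dots> = br (bs j) (bs k)" using that by auto
    finally show ?thesis .
  qed
  have ebL: "eb {i} \<in> Lam r 1" if "i < r" for i using Lam_eb[of "{i}" r] that by simp
  have bm: "pi2 (wedge (eb {i}) (eb {j})) = br (bs i) (bs j)" if "i < r" "j < r" for i j
  proof -
    consider "i < j" | "i = j" | "j < i" by linarith
    then show ?thesis
    proof cases
      case 1 then show ?thesis using eb_pair[OF 1, symmetric] p2e[OF 1 that(2)] by simp
    next
      case 2 then show ?thesis using wedge_self1[OF ebL[OF that(1)]] p2zero br_self by simp
    next
      case 3
      have h: "wedge (eb {i}) (eb {j}) = (\<lambda>K. (-1) * eb {j, i} K)"
        using wedge_comm_11[OF ebL[OF that(1)] ebL[OF that(2)]] eb_pair[OF 3] by simp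
      have "pi2 (wedge (eb {i}) (eb {j})) = (-1) *\<^sub>R pi2 (eb {j, i})" by (simp only: h p2scale)
      then show ?thesis using p2e[OF 3 that(1)] skew[of "bs j"] by simp
    qed
  qed
  have mor: "pi2 (wedge \<theta> \<theta>') = br (pi1 \<theta>) (pi1 \<theta>')" if th: "\<theta> \<in> Lam r 1" "\<theta>' \<in> Lam r 1" for \<theta> \<theta>'
  proof -
    have e1: "\<theta> = (\<lambda>S. \<Sum>A\<in>P_n r 1. \<theta> A * eb A S)" by (rule expand[OF th(1)])
    have e2: "\<theta>' = (\<lambda>S. \<Sum>B\<in>P_n r 1. \<theta>' B * eb B S)" by (rule expand[OF th(2)])
    have bmA: "pi2 (wedge (eb A) (eb B)) = br (pi1 (eb A)) (pi1 (eb B))" if AP: "A \<in> P_n r 1" and BP: "B \<in> P_n r 1" for A B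
    proof -
      obtain i where "A = {i}" using AP unfolding P_n_def by (auto simp: card_1_singleton_iff)
      moreover obtain j where "B = {j}" using BP unfolding P_n_def by (auto simp: card_1_singleton_iff)
      moreover have "i < r" "j < r" using AP BP calculation unfolding P_n_def by auto
      ultimately show ?thesis using bm p1e by simp
    qed
    have "wedge \<theta> \<theta>' = (\<lambda>K. \<Sum>A\<in>P_n r 1. \<theta> A * (\<lambda>K. \<Sum>B\<in>P_n r 1. \<theta>' B * wedge (eb A) (eb B) K) K)"
    proof (rule ext)
      fix K
      have "wedge \<theta> \<theta>' K = (\<Sum>A\<in>P_n r 1. \<theta> A * wedge (eb A) \<theta>' K)"
        by (subst e1, rule wedge_sum_l)
      also have "\<dots> = (\<Sum>A\<in>P_n r 1. \<theta> A * (\<Sum>B\<in>P_n r 1. \<theta>' B * wedge (eb A) (eb B) K))"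
        by (subst e2, simp only: wedge_sum_r)
      finally show "wedge \<theta> \<theta>' K = (\<Sum>A\<in>P_n r 1. \<theta> A * (\<lambda>K. \<Sum>B\<in>P_n r 1. \<theta>' B * wedge (eb A) (eb B) K) K)"
        by simp
    qed
    then have "pi2 (wedge \<theta> \<theta>') = (\<Sum>A\<in>P_n r 1. \<theta> A *\<^sub>R (\<Sum>B\<in>P_n r 1. \<theta>' B *\<^sub>R pi2 (wedge (eb A) (eb B))))"
      by (simp only: p2sum)
    also have "\<dots> = (\<Sum>A\<in>P_n r 1. \<theta> A *\<^sub>R (\<Sum>B\<in>P_n r 1. \<theta>' B *\<^sub>R br (pi1 (eb A)) (pi1 (eb B))))"
      by (intro sum.cong refl arg_cong2[where f="(*\<^sub>R)"]) (simp add: bmA)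
    also have "\<dots> = br (\<Sum>A\<in>P_n r 1. \<theta> A *\<^sub>R pi1 (eb A)) (\<Sum>B\<in>P_n r 1. \<theta>' B *\<^sub>R pi1 (eb B))"
      by (simp add: bilinear_sum[OF bil] sum.cartesian_product[symmetric] br_scale_l br_scale_r
          scaleR_sum_right mult_ac)
    also have "\<dots> = br (pi1 \<theta>) (pi1 \<theta>')"
    proof -
      have "pi1 \<theta> = (\<Sum>A\<in>P_n r 1. \<theta> A *\<^sub>R pi1 (eb A))" by (subst e1, rule p1sum)
      moreover have "pi1 \<theta>' = (\<Sum>B\<in>P_n r 1. \<theta>' B *\<^sub>R pi1 (eb B))" by (subst e2, rule p1sum)
      ultimately show ?thesis by simp
    qed
    finally show ?thesis .
  qed
  have s1: "pi1 ` Lam r 1 = UNIV"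
  proof (intro set_eqI iffI)
    fix x :: 'a
    define \<theta> where "\<theta> S = (\<Sum>i\<in>{..<r}. (x \<bullet> bs i) * eb {i} S)" for S
    have "\<theta> \<in> Lam r 1" unfolding \<theta>_def by (rule Lam_sum) (use ebL in blast)
    moreover have "pi1 \<theta> = x"
    proof -
      have "pi1 \<theta> = (\<Sum>i\<in>{..<r}. (x \<bullet> bs i) *\<^sub>R pi1 (eb {i}))" unfolding \<theta>_def by (rule p1sum)
      also have "\<dots> = (\<Sum>i\<in>{..<r}. (x \<bullet> bs i) *\<^sub>R bs i)" by (rule sum.cong) (simp_all add: p1e)
      also have "\<dots> = (\<Sum>b\<in>Basis. (x \<bullet> b) *\<^sub>R b)" by (rule sum.reindex_bij_betw[OF bs])
      also have "\<dots> = x" by (rule euclidean_representation)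
      finally show ?thesis .
    qed
    ultimately show "x \<in> pi1 ` Lam r 1" by blast
  qed simp
  have s2: "pi2 ` Lam r 2 = UNIV"
  proof -
    have sub: "subspace (pi2 ` Lam r 2)"
      unfolding real_vector.subspace_def
    proof (intro conjI ballI allI)
      have "pi2 zero_form = 0" by (rule p2zero)
      then show "0 \<in> pi2 ` Lam r 2" using Lam_zero[of r 2] by (metis image_eqI)
    next
      fix x y assume "x \<in> pi2 ` Lam r 2" "y \<in> pi2 ` Lam r 2"
      then obtain f g where fg: "f \<in> Lam r 2" "g \<in> Lam r 2" "x = pi2 f" "y = pi2 g" by blast
      have "x + y = pi2 (\<lambda>S. f S + g S)" using lin_on_add[OF l2 fg(1) fg(2)] fg(3,4) by simp
      moreover have "(\<lambda>S. f S + g S) \<in> Lam r 2" by (rule Lam_add[OF fg(1) fg(2)])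
      ultimately show "x + y \<in> pi2 ` Lam r 2" by blast
    next
      fix c x assume "x \<in> pi2 ` Lam r 2"
      then obtain f where f: "f \<in> Lam r 2" "x = pi2 f" by blast
      have "c *\<^sub>R x = pi2 (\<lambda>S. c * f S)" using lin_on_scale[OF l2 f(1)] f(2) by simp
      moreover have "(\<lambda>S. c * f S) \<in> Lam r 2" by (rule Lam_scale[OF f(1)])
      ultimately show "c *\<^sub>R x \<in> pi2 ` Lam r 2" by blast
    qed
    have "{br u v | u v. True} \<subseteq> pi2 ` Lam r 2"
    proof
      fix z assume "z \<in> {br u v | u v. True}"
      then obtain u v where z: "z = br u v" by blast
      have "u \<in> pi1 ` Lam r 1" using s1 by simp
      then obtain \<theta>u where tu: "\<theta>u \<in> Lam r 1" "pi1 \<theta>u = u" by blast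
      have "v \<in> pi1 ` Lam r 1" using s1 by simp
      then obtain \<theta>v where tv: "\<theta>v \<in> Lam r 1" "pi1 \<theta>v = v" by blast
      have "pi2 (wedge \<theta>u \<theta>v) = z" using mor[OF tu(1) tv(1)] tu(2) tv(2) z by simp
      moreover have "wedge \<theta>u \<theta>v \<in> Lam r 2" by (rule wedge_Lam11[OF tu(1) tv(1)])
      ultimately show "z \<in> pi2 ` Lam r 2" by blast
    qed
    then have "span {br u v | u v. True} \<subseteq> pi2 ` Lam r 2" by (rule real_vector.span_minimal[OF _ sub])
    then show ?thesis using spn by auto
  qed
  have "surj_carnot_morph_free r br pi1 pi2"
    unfolding surj_carnot_morph_free_def carnot_morph_free_def using l1 l2 mor s1 s2 by blast
  then show ?thesis unfolding r_def by blast
qed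


lemma LamPi_zero: "zero_form \<in> LamPi n k pi1 pi2"
  unfolding LamPi_def Anh12_def ker_morph_def using Lam_zero wedge_zero_r by auto

lemma E2':
  assumes NP: "\<forall>\<Phi>::'a \<Rightarrow> 'b \<Rightarrow> real. bilinear \<Phi> \<longrightarrow> (\<forall>x y. \<Phi> y (br x y) = 0) \<longrightarrow> (\<forall>x z. \<Phi> x z = 0)"
    and sm: "surj_carnot_morph_free n br pi1 pi2" and k3: "k + 3 \<le> n"
  shows "LamPi n k pi1 pi2 = {zero_form}"
proof (intro set_eqI iffI)
  fix \<eta> assume e: "\<eta> \<in> LamPi n k pi1 pi2"
  show "\<eta> \<in> {zero_form}"
  proof (rule ccontr)
    assume "\<eta> \<notin> {zero_form}"
    then have "\<eta> \<noteq> zero_form" by simp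
    then obtain \<Phi> :: "'a \<Rightarrow> 'b \<Rightarrow> real" where "bilinear \<Phi>" "\<forall>x y. \<Phi> y (br x y) = 0" "\<exists>x z. \<Phi> x z \<noteq> 0"
      using E2[OF sm k3 e] by blast
    then show False using NP by blast
  qed
next
  fix \<eta> assume "\<eta> \<in> {zero_form}"
  then show "\<eta> \<in> LamPi n k pi1 pi2" using LamPi_zero by simp
qed

lemma E3':
  assumes NP: "\<not> (\<forall>\<Phi>::'a \<Rightarrow> 'b \<Rightarrow> real. bilinear \<Phi> \<longrightarrow> (\<forall>x y. \<Phi> y (br x y) = 0) \<longrightarrow> (\<forall>x z. \<Phi> x z = 0))"
    and sm: "surj_carnot_morph_free n br pi1 pi2" and n3: "3 \<le> n"
  shows "LamPi n (n - 3) pi1 pi2 \<noteq> {zero_form}"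
proof -
  obtain \<Phi> :: "'a \<Rightarrow> 'b \<Rightarrow> real" and x0 z0 where "bilinear \<Phi>" "\<forall>x y. \<Phi> y (br x y) = 0" "\<Phi> x0 z0 \<noteq> 0"
    using NP by blast
  then obtain \<eta> where "\<eta> \<in> LamPi n (n - 3) pi1 pi2" "\<eta> \<noteq> zero_form"
    using E3[OF sm n3] by blast
  then show ?thesis by blast
qed

end

theorem theorem5p11:
  fixes br :: "'a::euclidean_space \<Rightarrow> 'a \<Rightarrow> 'b::euclidean_space"
  assumes "step2_carnot br"
    and "DIM('a) \<ge> 3"
  defines "r \<equiv> DIM('a)"
  shows "({f. h_affine br f} = {f. affine_fun f}
           \<longleftrightarrow> (\<forall>n (pi1 :: form \<Rightarrow> 'a) (pi2 :: form \<Rightarrow> 'b).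
                 n \<ge> r \<and> surj_carnot_morph_free n br pi1 pi2 \<longrightarrow>
                 (\<forall>k. n - r \<le> k \<and> k \<le> n - 3 \<longrightarrow> LamPi n k pi1 pi2 = {zero_form})))
       \<and> ({f. h_affine br f} = {f. affine_fun f}
           \<longleftrightarrow> (\<exists>(pi1 :: form \<Rightarrow> 'a) (pi2 :: form \<Rightarrow> 'b).
                 surj_carnot_morph_free r br pi1 pi2 \<and> LamPi r (r - 3) pi1 pi2 = {zero_form}))
       \<and> ({f. h_affine br f} = {f. affine_fun f}
           \<longleftrightarrow> (\<exists>n (pi1 :: form \<Rightarrow> 'a) (pi2 :: form \<Rightarrow> 'b).
                 n \<ge> r \<and> surj_carnot_morph_free n br pi1 pi2 \<and> LamPi n (n - 3) pi1 pi2 = {zero_form}))"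
proof -
  interpret c2 br by unfold_locales (rule assms(1))
  have r3: "3 \<le> r" using assms(2) unfolding r_def by simp
  have iff: "({f. h_affine br f} = {f::'a \<times> 'b \<Rightarrow> real. affine_fun f}) \<longleftrightarrow>
   (\<forall>\<Phi>::'a \<Rightarrow> 'b \<Rightarrow> real. bilinear \<Phi> \<longrightarrow> (\<forall>x y. \<Phi> y (br x y) = 0) \<longrightarrow> (\<forall>x z. \<Phi> x z = 0))"
    by (rule AH_iff)
  obtain p1 :: "form \<Rightarrow> 'a" and p2 :: "form \<Rightarrow> 'b" where sm: "surj_carnot_morph_free r br p1 p2"
    using E4 unfolding r_def by blast
  have A: "({f. h_affine br f} = {f. affine_fun f}
           \<longleftrightarrow> (\<forall>n (pi1 :: form \<Rightarrow> 'a) (pi2 :: form \<Rightarrow> 'b).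
                 n \<ge> r \<and> surj_carnot_morph_free n br pi1 pi2 \<longrightarrow>
                 (\<forall>k. n - r \<le> k \<and> k \<le> n - 3 \<longrightarrow> LamPi n k pi1 pi2 = {zero_form})))"
  proof
    assume "{f. h_affine br f} = {f. affine_fun f}"
    then have NP: "\<forall>\<Phi>::'a \<Rightarrow> 'b \<Rightarrow> real. bilinear \<Phi> \<longrightarrow> (\<forall>x y. \<Phi> y (br x y) = 0) \<longrightarrow> (\<forall>x z. \<Phi> x z = 0)"
      using iff by blast
    show "\<forall>n (pi1 :: form \<Rightarrow> 'a) (pi2 :: form \<Rightarrow> 'b).
                 n \<ge> r \<and> surj_carnot_morph_free n br pi1 pi2 \<longrightarrow>
                 (\<forall>k. n - r \<le> k \<and> k \<le> n - 3 \<longrightarrow> LamPi n k pi1 pi2 = {zero_form})"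
    proof (intro allI impI)
      fix n and pi1 :: "form \<Rightarrow> 'a" and pi2 :: "form \<Rightarrow> 'b" and k
      assume H: "r \<le> n \<and> surj_carnot_morph_free n br pi1 pi2" and K: "n - r \<le> k \<and> k \<le> n - 3"
      have "k + 3 \<le> n" using H K r3 by arith
      then show "LamPi n k pi1 pi2 = {zero_form}" using E2'[OF NP] H by blast
    qed
  next
    assume H: "\<forall>n (pi1 :: form \<Rightarrow> 'a) (pi2 :: form \<Rightarrow> 'b).
                 n \<ge> r \<and> surj_carnot_morph_free n br pi1 pi2 \<longrightarrow>
                 (\<forall>k. n - r \<le> k \<and> k \<le> n - 3 \<longrightarrow> LamPi n k pi1 pi2 = {zero_form})"
    show "{f. h_affine br f} = {f. affine_fun f}"
    proof (rule ccontr)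
      assume "{f. h_affine br f} \<noteq> {f. affine_fun f}"
      then have nNP: "\<not> (\<forall>\<Phi>::'a \<Rightarrow> 'b \<Rightarrow> real. bilinear \<Phi> \<longrightarrow> (\<forall>x y. \<Phi> y (br x y) = 0) \<longrightarrow> (\<forall>x z. \<Phi> x z = 0))"
        using iff by blast
      have "LamPi r (r - 3) p1 p2 = {zero_form}" using H sm by auto
      then show False using E3'[OF nNP sm r3] by blast
    qed
  qed
  have B: "({f. h_affine br f} = {f. affine_fun f}
           \<longleftrightarrow> (\<exists>(pi1 :: form \<Rightarrow> 'a) (pi2 :: form \<Rightarrow> 'b).
                 surj_carnot_morph_free r br pi1 pi2 \<and> LamPi r (r - 3) pi1 pi2 = {zero_form}))"
  proof
    assume "{f. h_affine br f} = {f. affine_fun f}"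
    then have NP: "\<forall>\<Phi>::'a \<Rightarrow> 'b \<Rightarrow> real. bilinear \<Phi> \<longrightarrow> (\<forall>x y. \<Phi> y (br x y) = 0) \<longrightarrow> (\<forall>x z. \<Phi> x z = 0)"
      using iff by blast
    have "r - 3 + 3 \<le> r" using r3 by simp
    then have "LamPi r (r - 3) p1 p2 = {zero_form}" using E2'[OF NP sm] by blast
    then show "\<exists>(pi1 :: form \<Rightarrow> 'a) (pi2 :: form \<Rightarrow> 'b).
                 surj_carnot_morph_free r br pi1 pi2 \<and> LamPi r (r - 3) pi1 pi2 = {zero_form}"
      using sm by blast
  next
    assume "\<exists>(pi1 :: form \<Rightarrow> 'a) (pi2 :: form \<Rightarrow> 'b).
                 surj_carnot_morph_free r br pi1 pi2 \<and> LamPi r (r - 3) pi1 pi2 = {zero_form}"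
    then obtain q1 :: "form \<Rightarrow> 'a" and q2 :: "form \<Rightarrow> 'b" where
      q: "surj_carnot_morph_free r br q1 q2" "LamPi r (r - 3) q1 q2 = {zero_form}" by blast
    show "{f. h_affine br f} = {f. affine_fun f}"
    proof (rule ccontr)
      assume "{f. h_affine br f} \<noteq> {f. affine_fun f}"
      then have nNP: "\<not> (\<forall>\<Phi>::'a \<Rightarrow> 'b \<Rightarrow> real. bilinear \<Phi> \<longrightarrow> (\<forall>x y. \<Phi> y (br x y) = 0) \<longrightarrow> (\<forall>x z. \<Phi> x z = 0))"
        using iff by blast
      show False using E3'[OF nNP q(1) r3] q(2) by blast
    qed
  qed
  have C: "({f. h_affine br f} = {f. affine_fun f}
           \<longleftrightarrow> (\<exists>n (pi1 :: form \<Rightarrow> 'a) (pi2 :: form \<Rightarrow> 'b).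
                 n \<ge> r \<and> surj_carnot_morph_free n br pi1 pi2 \<and> LamPi n (n - 3) pi1 pi2 = {zero_form}))"
  proof
    assume "{f. h_affine br f} = {f. affine_fun f}"
    then obtain q1 :: "form \<Rightarrow> 'a" and q2 :: "form \<Rightarrow> 'b" where
      q: "surj_carnot_morph_free r br q1 q2" "LamPi r (r - 3) q1 q2 = {zero_form}" using B by blast
    then show "\<exists>n (pi1 :: form \<Rightarrow> 'a) (pi2 :: form \<Rightarrow> 'b).
                 n \<ge> r \<and> surj_carnot_morph_free n br pi1 pi2 \<and> LamPi n (n - 3) pi1 pi2 = {zero_form}"
      by blast
  next
    assume "\<exists>n (pi1 :: form \<Rightarrow> 'a) (pi2 :: form \<Rightarrow> 'b).
                 n \<ge> r \<and> surj_carnot_morph_free n br pi1 pi2 \<and> LamPi n (n - 3) pi1 pi2 = {zero_form}"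
    then obtain n and q1 :: "form \<Rightarrow> 'a" and q2 :: "form \<Rightarrow> 'b" where
      q: "n \<ge> r" "surj_carnot_morph_free n br q1 q2" "LamPi n (n - 3) q1 q2 = {zero_form}" by blast
    show "{f. h_affine br f} = {f. affine_fun f}"
    proof (rule ccontr)
      assume "{f. h_affine br f} \<noteq> {f. affine_fun f}"
      then have nNP: "\<not> (\<forall>\<Phi>::'a \<Rightarrow> 'b \<Rightarrow> real. bilinear \<Phi> \<longrightarrow> (\<forall>x y. \<Phi> y (br x y) = 0) \<longrightarrow> (\<forall>x z. \<Phi> x z = 0))"
        using iff by blast
      have "3 \<le> n" using q(1) r3 by simp
      then show False using E3'[OF nNP q(2)] q(3) by blast
    qed
  qed
  show ?thesis using A B C by blast
qed


end
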